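(* Let $n\ge 2$, $q=p^e$ a prime power, $\mu$ a generator of $\mathbb{F}_q^*$, $V=\mathbb{F}_q^{n+1}$ with standard basis $v_0,\dots,v_n$, $\alpha_0=\langle v_0\rangle_{\mathbb{F}_q}$, and let $Z\mathrm{SL}_{n+1}(q)\le G\le \Gamma\mathrm{L}_{n+1}(q)$, where $Z$ is the group of scalar matrices. Let $M\le L\le G(\alpha_0)$. Then the following are equivalent: (i) the action of $G$ on $G/L$ is $2$-by-block-transitive with block stabilizer $G(\alpha_0)$; (ii) $e_L=e_G$ and $\det(L_{\mathrm{GL}})=\det(G_{\mathrm{GL}})$; (iii) $e_L=e_G$ and the index $|G(\alpha_0):L|$ is coprime to $|\mathrm{Pdet}(G_{\mathrm{GL}})|$.
   Context: $G(\alpha_0)$ is the stabilizer of the line $\alpha_0$; $W$ is the subgroup of $G$ acting trivially on $\alpha_0$ and on $V/\alpha_0$; $\mathrm{SL}_n(q)$ is the group of determinant-$1$ linear maps fixing $v_0$ and preserving $\langle v_1,\dots,v_n\rangle$; $M=W\rtimes Z\mathrm{SL}_n(q)$. For $H\le\Gamma\mathrm{L}_{n+1}(q)$, $H_{\mathrm{GL}} = H\cap\mathrm{GL}_{n+1}(q)$ and $e_H = |H:H_{\mathrm{GL}}|$. For $g\in\mathrm{GL}_{n+1}(q)$, $\mathrm{Pdet}(g)$ is the image of $\det(g)$ in $\mathbb{F}_q^*/\langle\mu^{n+1}\rangle$, and $\mathrm{Pdet}(H_{\mathrm{GL}})$ is the set of such images for $g\in H_{\mathrm{GL}}$. The action on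 $G/L$ is $2$-by-block-transitive with block stabilizer $G(\alpha_0)$ if $G$ is transitive on pairs $(aL,bL)$ with $aG(\alpha_0)\neq bG(\alpha_0)$. *)

theory Defs
  imports "HOL-Analysis.Analysis"
begin

text \<open>Vectors of V = F_q^(n+1) are elements of type 'a^'n with CARD('n) = n+1;
  group elements are bijections of V, the group operation is composition.\<close>

type_synonym ('a, 'n) vmap = "'a^'n \<Rightarrow> 'a^'n"

definition field_aut :: "('a::field \<Rightarrow> 'a) \<Rightarrow> bool" where
  "field_aut s \<longleftrightarrow> bij s \<and> (\<forall>x y. s (x + y) = s x + s y \<and> s (x * y) = s x * s y)"

definition semilinear :: "('a::field \<Rightarrow> 'a) \<Rightarrow> ('a, 'n::finite) vmap \<Rightarrow> bool" where
  "semilinear s g \<longleftrightarrow> (\<forall>x y. g (x + y) = g x + g y) \<and> (\<forall>c x. g (c *s x) = s c *s g x)"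

definition GammaL :: "('a::field, 'n::finite) vmap set" where
  "GammaL = {g. bij g \<and> (\<exists>s. field_aut s \<and> semilinear s g)}"

definition GL :: "('a::field, 'n::finite) vmap set" where
  "GL = {g. bij g \<and> semilinear id g}"

definition std_basis :: "'n::finite \<Rightarrow> 'a::zero_neq_one^'n" where
  "std_basis j = (\<chi> k. if k = j then 1 else 0)"

definition mat_of :: "('a::field, 'n::finite) vmap \<Rightarrow> 'a^'n^'n" where
  "mat_of g = (\<chi> i j. (g (std_basis j)) $ i)"

definition gdet :: "('a::field, 'n::finite) vmap \<Rightarrow> 'a" where
  "gdet g = det (mat_of g)"

definition SL :: "('a::field, 'n::finite) vmap set" where
  "SL = {g \<in> GL. gdet g = 1}"

definition Zsc :: "('a::field, 'n::finite) vmap set" where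
  "Zsc = {(\<lambda>x. c *s x) | c. c \<noteq> 0}"

definition setprod :: "('a, 'n) vmap set \<Rightarrow> ('a, 'n) vmap set \<Rightarrow> ('a, 'n) vmap set" where
  "setprod A B = {a \<circ> b | a b. a \<in> A \<and> b \<in> B}"

definition is_subgroup :: "('a::field, 'n::finite) vmap set \<Rightarrow> bool" where
  "is_subgroup H \<longleftrightarrow> H \<subseteq> GammaL \<and> id \<in> H \<and> (\<forall>g\<in>H. \<forall>h\<in>H. g \<circ> h \<in> H)
     \<and> (\<forall>g\<in>H. inv g \<in> H)"

text \<open>The line alpha_0 = <v_0> and the hyperplane <v_1,...,v_n> (i0 plays the role of index 0).\<close>
definition line0 :: "'n::finite \<Rightarrow> ('a::field^'n) set" where
  "line0 i0 = {c *s std_basis i0 | c. True}"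

definition hyp0 :: "'n::finite \<Rightarrow> ('a::field^'n) set" where
  "hyp0 i0 = {x. x $ i0 = 0}"

definition stab0 :: "'n::finite \<Rightarrow> ('a::field, 'n::finite) vmap set \<Rightarrow> ('a, 'n) vmap set" where
  "stab0 i0 G = {g \<in> G. g ` line0 i0 = line0 i0}"

definition Wgrp :: "'n::finite \<Rightarrow> ('a::field, 'n::finite) vmap set \<Rightarrow> ('a, 'n) vmap set" where
  "Wgrp i0 G = {g \<in> G. (\<forall>x \<in> line0 i0. g x = x) \<and> (\<forall>x. g x - x \<in> line0 i0)}"

definition SLn :: "'n::finite \<Rightarrow> ('a::field, 'n::finite) vmap set" where
  "SLn i0 = {g \<in> GL. gdet g = 1 \<and> g (std_basis i0) = std_basis i0 \<and> g ` hyp0 i0 = hyp0 i0}"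

definition Mgrp :: "'n::finite \<Rightarrow> ('a::field, 'n::finite) vmap set \<Rightarrow> ('a, 'n) vmap set" where
  "Mgrp i0 G = setprod (Wgrp i0 G) (setprod Zsc (SLn i0))"

definition GLpart :: "('a::field, 'n::finite) vmap set \<Rightarrow> ('a, 'n) vmap set" where
  "GLpart H = H \<inter> GL"

definition eidx :: "('a::field, 'n::finite) vmap set \<Rightarrow> nat" where
  "eidx H = card H div card (GLpart H)"

definition dets :: "('a::field, 'n::finite) vmap set \<Rightarrow> 'a set" where
  "dets H = gdet ` H"

text \<open>Pdet(g): image of det g in F_q^*/<mu^(n+1)>, represented as the coset det(g) <mu^(n+1)>.\<close>
definition Pdet :: "'a::field \<Rightarrow> ('a, 'n::finite) vmap \<Rightarrow> 'a set" where
  "Pdet mu g = (\<lambda>y. gdet g * y) ` {mu ^ (k * CARD('n)) | k. True}"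

definition Pdets :: "'a::field \<Rightarrow> ('a, 'n::finite) vmap set \<Rightarrow> 'a set set" where
  "Pdets mu H = Pdet mu ` H"

definition lcoset :: "('a, 'n) vmap \<Rightarrow> ('a, 'n) vmap set \<Rightarrow> ('a, 'n) vmap set" where
  "lcoset a H = (\<lambda>h. a \<circ> h) ` H"

definition two_by_block_transitive ::
  "('a, 'n) vmap set \<Rightarrow> ('a, 'n) vmap set \<Rightarrow> ('a, 'n) vmap set \<Rightarrow> bool" where
  "two_by_block_transitive G L B \<longleftrightarrow>
     (\<forall>a\<in>G. \<forall>b\<in>G. \<forall>c\<in>G. \<forall>d\<in>G.
        lcoset a B \<noteq> lcoset b B \<and> lcoset c B \<noteq> lcoset d B \<longrightarrow>
        (\<exists>g\<in>G. lcoset (g \<circ> a) L = lcoset c L \<and> lcoset (g \<circ> b) L = lcoset d L))"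

end

theory Submission
  imports Defs
begin

section \<open>Field automorphisms\<close>

lemma fa_add: "field_aut s \<Longrightarrow> s (x + y) = s x + s y" by (simp add: field_aut_def)
lemma fa_mult: "field_aut s \<Longrightarrow> s (x * y) = s x * s y" by (simp add: field_aut_def)
lemma fa_bij: "field_aut s \<Longrightarrow> bij s" by (simp add: field_aut_def)
lemma fa_inj: "field_aut s \<Longrightarrow> inj s" using fa_bij bij_is_inj by blast

lemma fa_0: "field_aut s \<Longrightarrow> s 0 = (0::'a::field)"
proof -
  assume "field_aut s"
  hence "s 0 + s 0 = s 0 + 0" using fa_add[of s 0 0] by simp
  thus ?thesis by (metis add_left_cancel)
qed

lemma fa_eq_iff: "field_aut s \<Longrightarrow> s x = s y \<longleftrightarrow> x = y"
  using fa_inj by (metis injD)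

lemma fa_eq0_iff: "field_aut s \<Longrightarrow> s x = 0 \<longleftrightarrow> x = (0::'a::field)"
  using fa_eq_iff fa_0 by metis

lemma fa_1: "field_aut s \<Longrightarrow> s 1 = (1::'a::field)"
proof -
  assume s: "field_aut s"
  have "s 1 * s 1 = s 1 * 1" using fa_mult[OF s, of 1 1] by simp
  moreover have "s 1 \<noteq> 0" using fa_eq0_iff[OF s, of 1] by simp
  ultimately show ?thesis by (metis mult_left_cancel)
qed

lemma fa_uminus: "field_aut s \<Longrightarrow> s (- x) = - s (x::'a::field)"
  using fa_add[of s x "-x"] fa_0[of s] by (metis add.right_inverse minus_unique)

lemma fa_diff: "field_aut s \<Longrightarrow> s (x - y) = s x - s (y::'a::field)"
  using fa_add[of s x "-y"] fa_uminus[of s y] by simp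

lemma fa_inverse: "field_aut s \<Longrightarrow> s (inverse x) = inverse (s (x::'a::field))"
proof (cases "x = 0")
  case True
  assume "field_aut s" thus ?thesis using True fa_0[of s] by simp
next
  case False
  assume s: "field_aut s"
  have "s x * s (inverse x) = 1" using fa_mult[OF s, of x "inverse x"] False fa_1[OF s] by simp
  thus ?thesis by (metis inverse_unique)
qed

lemma fa_divide: "field_aut s \<Longrightarrow> s (x / y) = s x / s (y::'a::field)"
  by (simp add: divide_inverse fa_mult fa_inverse)

lemma fa_power: "field_aut s \<Longrightarrow> s (x ^ k) = s (x::'a::field) ^ k"
  by (induction k) (simp_all add: fa_1 fa_mult)

lemma fa_sum: "field_aut s \<Longrightarrow> s (sum f A) = (\<Sum>x\<in>A. s (f x::'a::field))"
  by (induction A rule: infinite_finite_induct) (simp_all add: fa_0 fa_add)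

lemma fa_prod: "field_aut s \<Longrightarrow> s (prod f A) = (\<Prod>x\<in>A. s (f x::'a::field))"
  by (induction A rule: infinite_finite_induct) (simp_all add: fa_1 fa_mult)

lemma fa_of_int_sign: "field_aut s \<Longrightarrow> s (of_int (sign p)) = (of_int (sign p)::'a::field)"
  by (simp add: sign_def fa_1 fa_uminus)

definition mmap :: "('a \<Rightarrow> 'a) \<Rightarrow> 'a^'n^'n \<Rightarrow> 'a^'n^'n" where
  "mmap s M = (\<chi> i j. s (M$i$j))"

lemma fa_det: "field_aut s \<Longrightarrow> s (det M) = det (mmap s (M::'a::field^'n::finite^'n))"
  by (simp add: det_def fa_sum fa_mult fa_prod fa_of_int_sign mmap_def)

lemma fa_id: "field_aut id"
  by (simp add: field_aut_def)

lemma fa_comp: "field_aut s \<Longrightarrow> field_aut t \<Longrightarrow> field_aut (s \<circ> t)"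
  by (simp add: field_aut_def bij_comp)

section \<open>Semilinear maps\<close>

lemma sl_add: "semilinear s g \<Longrightarrow> g (x + y) = g x + g y" by (simp add: semilinear_def)
lemma sl_scale: "semilinear s g \<Longrightarrow> g (c *s x) = s c *s g x" by (simp add: semilinear_def)

lemma sl_0: "semilinear s g \<Longrightarrow> g 0 = 0"
  using sl_add[of s g 0 0] by simp

lemma sl_sum: "semilinear s g \<Longrightarrow> g (sum f A) = (\<Sum>x\<in>A. g (f x))"
  by (induction A rule: infinite_finite_induct) (simp_all add: sl_0 sl_add)

lemma sl_uminus: "semilinear s g \<Longrightarrow> g (- x) = - g (x::'a::field^'n)"
  using sl_add[of s g x "-x"] sl_0[of s g] by (metis add.right_inverse minus_unique)

lemma sl_diff: "semilinear s g \<Longrightarrow> g (x - y) = g x - g (y::'a::field^'n)"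
  using sl_add[of s g x "-y"] sl_uminus[of s g y] by simp

lemma std_basis_axis: "std_basis j = axis j 1"
  by (simp add: std_basis_def axis_def)

lemma vec_expansion: "(x::'a::field^'n::finite) = (\<Sum>j\<in>UNIV. (x$j) *s std_basis j)"
  by (simp add: std_basis_axis basis_expansion)

lemma sl_expansion:
  assumes "semilinear s g"
  shows "g x = (\<Sum>j\<in>UNIV. s (x$j) *s g (std_basis j))"
proof -
  have "g x = g (\<Sum>j\<in>UNIV. (x$j) *s std_basis j)" using vec_expansion[of x] by simp
  also have "\<dots> = (\<Sum>j\<in>UNIV. s (x$j) *s g (std_basis j))"
    by (simp add: sl_sum[OF assms] sl_scale[OF assms])
  finally show ?thesis .
qed

lemma sl_component:
  assumes "semilinear s g"
  shows "g x $ i = (\<Sum>j\<in>UNIV. mat_of g $ i $ j * s (x$j))"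
  by (subst sl_expansion[OF assms]) (simp add: mat_of_def sum_component mult.commute)

lemma lin_mat: "semilinear id g \<Longrightarrow> g x = mat_of g *v x"
  by (rule vec_eq_iff[THEN iffD2]) (simp add: sl_component matrix_vector_mult_def)

lemma mat_of_comp:
  assumes "semilinear s g"
  shows "mat_of (g \<circ> h) = mat_of g ** mmap s (mat_of h)"
proof -
  have "mat_of (g \<circ> h) $ i $ j = (mat_of g ** mmap s (mat_of h)) $ i $ j" for i j
  proof -
    have "mat_of (g \<circ> h) $ i $ j = g (h (std_basis j)) $ i" by (simp add: mat_of_def)
    also have "\<dots> = (\<Sum>k\<in>UNIV. mat_of g $ i $ k * s (h (std_basis j) $ k))"
      by (rule sl_component[OF assms])
    also have "\<dots> = (mat_of g ** mmap s (mat_of h)) $ i $ j"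
      unfolding matrix_matrix_mult_def mmap_def by (simp add: mat_of_def[of h])
    finally show ?thesis .
  qed
  thus ?thesis by (simp add: vec_eq_iff)
qed

lemma gdet_comp:
  assumes "semilinear s g" "field_aut s"
  shows "gdet (g \<circ> h) = gdet g * s (gdet h)"
  by (simp add: gdet_def mat_of_comp[OF assms(1)] det_mul fa_det[OF assms(2)])

lemma sl_comp: "semilinear s g \<Longrightarrow> semilinear t h \<Longrightarrow> semilinear (s \<circ> t) (g \<circ> h)"
  by (simp add: semilinear_def)

lemma sl_id: "semilinear id id" by (simp add: semilinear_def)

lemma mat_of_id: "mat_of (id::('a::field,'n::finite) vmap) = mat 1"
  by (simp add: mat_of_def vec_eq_iff std_basis_def mat_def)

lemma gdet_id: "gdet (id::('a::field,'n::finite) vmap) = 1"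
  by (simp add: gdet_def mat_of_id)

lemma std_basis_nz: "std_basis j \<noteq> (0::'a::field^'n::finite)"
  by (simp add: std_basis_def vec_eq_iff)

lemma std_basis_comp: "std_basis j $ k = (if k = j then 1 else 0)"
  by (simp add: std_basis_def)

lemma sl_unique:
  assumes "semilinear s g" "semilinear t g" "g x \<noteq> (0::'a::field^'n::finite)"
  shows "s = t"
proof
  fix c
  have "s c *s g x = t c *s g x" using sl_scale[OF assms(1)] sl_scale[OF assms(2)] by metis
  hence "(s c - t c) *s g x = 0" by (simp add: vector_sub_rdistrib)
  thus "s c = t c" using assms(3) by (simp add: vec_eq_iff) (metis right_minus_eq)
qed


lemma row_mat1: "row j (mat 1 :: 'a::field^'n::finite^'n) = axis j 1"
  by (simp add: row_def mat_def axis_def vec_eq_iff eq_commute)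

lemma span_rows_I:
  fixes x :: "'a::field^'n::finite"
  assumes "x$i = 0"
  shows "x \<in> vec.span {row j (mat 1 :: 'a^'n^'n) | j. j \<noteq> i}"
proof -
  have "x = (\<Sum>j\<in>UNIV. (x$j) *s axis j 1)" by (simp add: basis_expansion)
  also have "\<dots> = (\<Sum>j\<in>UNIV - {i}. (x$j) *s axis j 1)"
    by (rule sum.mono_neutral_right) (auto simp: assms)
  finally have x: "x = (\<Sum>j\<in>UNIV - {i}. (x$j) *s axis j 1)" .
  show ?thesis
    apply (subst x)
    apply (rule vec.span_sum)
    apply (rule vec.span_scale)
    apply (rule vec.span_base)
    apply (auto simp: row_mat1)
    done
qed

lemma det_row_one:
  fixes x :: "'a::field^'n::finite"
  assumes "x$i = 0"
  shows "det ((\<chi> k. if k = i then row i (mat 1) + x else row k (mat 1)) :: 'a^'n^'n) = 1"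
  using det_row_span[OF span_rows_I[OF assms]] by simp

definition tv :: "'n \<Rightarrow> 'a \<Rightarrow> 'a^'n \<Rightarrow> ('a::field, 'n::finite) vmap" where
  "tv j c u = (\<lambda>x. x + (c * x$j) *s u)"

definition rv :: "'n \<Rightarrow> 'a^'n \<Rightarrow> ('a::field, 'n::finite) vmap" where
  "rv i r = (\<lambda>x. x + (\<Sum>k\<in>UNIV. r$k * x$k) *s std_basis i)"

definition dg :: "('n \<Rightarrow> 'a) \<Rightarrow> ('a::field, 'n::finite) vmap" where
  "dg d = (\<lambda>x. \<chi> i. d i * x$i)"

definition sc :: "'a \<Rightarrow> ('a::field, 'n::finite) vmap" where
  "sc c = (\<lambda>x. c *s x)"

lemma tv_sl: "semilinear id (tv j c u)"
  by (simp add: semilinear_def tv_def vec_eq_iff algebra_simps)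

lemma rv_sl: "semilinear id (rv i r)"
  by (simp add: semilinear_def rv_def vec_eq_iff algebra_simps sum.distrib sum_distrib_left)

lemma dg_sl: "semilinear id (dg d)"
  by (simp add: semilinear_def dg_def vec_eq_iff algebra_simps)

lemma sc_sl: "semilinear id (sc c)"
  by (simp add: semilinear_def sc_def vec_eq_iff algebra_simps)

lemma tv_inv: "u$j = 0 \<Longrightarrow> tv j (-c) u \<circ> tv j c u = id"
  by (simp add: fun_eq_iff tv_def vec_eq_iff algebra_simps)

lemma rv_inv: "r$i = 0 \<Longrightarrow> rv i (-r) \<circ> rv i r = id"
proof -
  assume r: "r$i = 0"
  have e: "r$k * std_basis i $ k = (if k = i then r$i else 0)" for k
    by (simp add: std_basis_comp)
  have z: "(\<Sum>k\<in>UNIV. r$k * std_basis i $ k) = 0"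
    by (simp only: e sum.delta') (simp add: r)
  have "rv i (-r) (rv i r x) = x" for x
  proof -
    define s where "s = (\<Sum>k\<in>UNIV. r$k * x$k)"
    have "(\<Sum>k\<in>UNIV. (-r)$k * (x + s *s std_basis i) $ k)
        = - (\<Sum>k\<in>UNIV. r$k * x$k) - s * (\<Sum>k\<in>UNIV. r$k * std_basis i $ k)"
      by (simp add: algebra_simps sum.distrib sum_distrib_left sum_negf sum_subtractf)
    also have "\<dots> = - s - s * (\<Sum>k\<in>UNIV. r$k * std_basis i $ k)" by (simp add: s_def)
    also have "\<dots> = - s" using z by simp
    finally show ?thesis unfolding rv_def s_def[symmetric]
      by (simp add: algebra_simps)
  qed
  thus ?thesis by (simp add: fun_eq_iff)
qed

lemma bij_of_inv: "f \<circ> g = id \<Longrightarrow> g \<circ> f = id \<Longrightarrow> bij g"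
  using o_bij by blast

lemma tv_bij: "u$j = 0 \<Longrightarrow> bij (tv j c u)"
  using bij_of_inv[of "tv j (-c) u" "tv j c u"] tv_inv[of u j c] tv_inv[of u j "-c"] by simp

lemma rv_bij: "r$i = 0 \<Longrightarrow> bij (rv i r)"
  using bij_of_inv[of "rv i (-r)" "rv i r"] rv_inv[of r i] rv_inv[of "-r" i] by simp

lemma dg_bij:
  assumes "\<forall>i. d i \<noteq> 0"
  shows "bij (dg d)"
proof -
  have "dg (\<lambda>i. inverse (d i)) \<circ> dg d = id" "dg d \<circ> dg (\<lambda>i. inverse (d i)) = id"
    using assms by (simp_all add: fun_eq_iff dg_def vec_eq_iff)
  thus ?thesis using bij_of_inv by blast
qed

lemma sc_dg: "sc c = dg (\<lambda>_. c)"
  by (simp add: fun_eq_iff sc_def dg_def vec_eq_iff)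

lemma sc_bij: "c \<noteq> 0 \<Longrightarrow> bij (sc c)"
  by (simp add: sc_dg dg_bij)

lemma gdet_tv:
  assumes "u$j = 0"
  shows "gdet (tv j c u) = 1"
proof -
  have "mat_of (tv j c u) = transpose ((\<chi> k. if k = j then row j (mat 1) + (c *s u) else row k (mat 1)))"
    by (simp add: vec_eq_iff mat_of_def tv_def transpose_def row_def mat_def std_basis_comp)
  thus ?thesis using det_row_one[of "c *s u" j] assms by (simp add: gdet_def)
qed

lemma gdet_rv:
  assumes "r$i = 0"
  shows "gdet (rv i r) = 1"
proof -
  have "mat_of (rv i r) = (\<chi> k. if k = i then row i (mat 1) + r else row k (mat 1))"
    by (simp add: vec_eq_iff mat_of_def rv_def row_def mat_def std_basis_comp if_distrib cong: if_cong)
  thus ?thesis using det_row_one[of r i] assms by (simp add: gdet_def)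
qed

lemma gdet_dg: "gdet (dg d) = prod d UNIV"
proof -
  have "mat_of (dg d) = (\<chi> i j. if i = j then d i else 0)"
    by (simp add: vec_eq_iff mat_of_def dg_def std_basis_comp)
  thus ?thesis by (simp add: gdet_def det_diagonal)
qed

lemma gdet_sc: "gdet (sc c :: ('a::field,'n::finite) vmap) = c ^ CARD('n)"
  by (simp add: sc_dg gdet_dg)

lemma GL_I: "bij g \<Longrightarrow> semilinear id g \<Longrightarrow> g \<in> GL"
  by (simp add: GL_def)

lemma SL_I: "bij g \<Longrightarrow> semilinear id g \<Longrightarrow> gdet g = 1 \<Longrightarrow> g \<in> SL"
  by (simp add: GL_def SL_def)

lemma tv_SL: "u$j = 0 \<Longrightarrow> tv j c u \<in> SL"
  by (simp add: SL_I tv_bij tv_sl gdet_tv)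

lemma rv_SL: "r$i = 0 \<Longrightarrow> rv i r \<in> SL"
  by (simp add: SL_I rv_bij rv_sl gdet_rv)

lemma dg_GL: "\<forall>i. d i \<noteq> 0 \<Longrightarrow> dg d \<in> GL"
  by (simp add: GL_I dg_bij dg_sl)

lemma sc_Zsc: "c \<noteq> 0 \<Longrightarrow> sc c \<in> Zsc"
  by (auto simp: Zsc_def sc_def)

lemma Zsc_sc: "z \<in> Zsc \<Longrightarrow> \<exists>c. c \<noteq> 0 \<and> z = sc c"
  by (auto simp: Zsc_def sc_def)


section \<open>Groups of bijections\<close>

definition grp :: "('b \<Rightarrow> 'b) set \<Rightarrow> bool" where
  "grp H \<longleftrightarrow> id \<in> H \<and> (\<forall>g\<in>H. \<forall>h\<in>H. g \<circ> h \<in> H) \<and> (\<forall>g\<in>H. inv g \<in> H) \<and> (\<forall>g\<in>H. bij g)"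

lemma grp_id: "grp H \<Longrightarrow> id \<in> H" by (simp add: grp_def)
lemma grp_comp: "grp H \<Longrightarrow> g \<in> H \<Longrightarrow> h \<in> H \<Longrightarrow> g \<circ> h \<in> H" by (simp add: grp_def)
lemma grp_inv: "grp H \<Longrightarrow> g \<in> H \<Longrightarrow> inv g \<in> H" by (simp add: grp_def)
lemma grp_bij: "grp H \<Longrightarrow> g \<in> H \<Longrightarrow> bij g" by (simp add: grp_def)

lemma inv_comp_cancel: "bij g \<Longrightarrow> inv g \<circ> g = id"
  by (simp add: bij_is_inj)
lemma comp_inv_cancel: "bij g \<Longrightarrow> g \<circ> inv g = id"
  by (simp add: fun_eq_iff bij_is_surj surj_f_inv_f)
lemma inv_comp_cancel2: "bij g \<Longrightarrow> inv g \<circ> (g \<circ> h) = h"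
  by (simp add: fun_eq_iff bij_is_inj)
lemma comp_inv_cancel2: "bij g \<Longrightarrow> g \<circ> (inv g \<circ> h) = h"
  by (simp add: fun_eq_iff bij_is_surj surj_f_inv_f)
lemma inv_comp_distrib: "bij g \<Longrightarrow> bij h \<Longrightarrow> inv (g \<circ> h) = inv h \<circ> inv g"
  by (simp add: o_inv_distrib)
lemma inv_inv_bij: "bij g \<Longrightarrow> inv (inv g) = g"
  by (simp add: inv_inv_eq)
lemma bij_inv_bij: "bij g \<Longrightarrow> bij (inv g)"
  by (simp add: bij_imp_bij_inv)

lemma comp_left_cancel: "bij g \<Longrightarrow> g \<circ> h = g \<circ> k \<Longrightarrow> h = k"
  by (metis inv_comp_cancel2)

lemma grp_subgroup: "is_subgroup H \<Longrightarrow> grp H"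
  by (auto simp: is_subgroup_def grp_def GammaL_def)

lemma lcoset_eq:
  assumes "grp H" "bij a" "bij b"
  shows "lcoset a H = lcoset b H \<longleftrightarrow> inv a \<circ> b \<in> H"
proof
  assume "lcoset a H = lcoset b H"
  hence "b \<in> lcoset a H" using grp_id[OF assms(1)] unfolding lcoset_def
    by (metis comp_id image_eqI)
  then obtain h where "h \<in> H" "b = a \<circ> h" by (auto simp: lcoset_def)
  thus "inv a \<circ> b \<in> H" using assms(2) by (simp add: inv_comp_cancel2)
next
  assume h0: "inv a \<circ> b \<in> H"
  have ab: "a \<circ> (inv a \<circ> b) = b" using assms(2) by (simp add: comp_inv_cancel2)
  have inv0: "inv (inv a \<circ> b) \<in> H" using grp_inv[OF assms(1) h0] .
  have ba: "b \<circ> inv (inv a \<circ> b) = a"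
    using assms(2,3) by (simp add: inv_comp_distrib bij_inv_bij inv_inv_bij o_assoc comp_inv_cancel)
  show "lcoset a H = lcoset b H"
  proof
    show "lcoset a H \<subseteq> lcoset b H"
    proof
      fix x assume "x \<in> lcoset a H"
      then obtain h where h: "h \<in> H" "x = a \<circ> h" by (auto simp: lcoset_def)
      have "x = b \<circ> (inv (inv a \<circ> b) \<circ> h)" using h ba by (simp add: o_assoc)
      moreover have "inv (inv a \<circ> b) \<circ> h \<in> H" using grp_comp[OF assms(1) inv0 h(1)] .
      ultimately show "x \<in> lcoset b H" by (auto simp: lcoset_def)
    qed
  next
    show "lcoset b H \<subseteq> lcoset a H"
    proof
      fix x assume "x \<in> lcoset b H"
      then obtain h where h: "h \<in> H" "x = b \<circ> h" by (auto simp: lcoset_def)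
      have "x = a \<circ> ((inv a \<circ> b) \<circ> h)" using h ab by (simp add: o_assoc)
      moreover have "(inv a \<circ> b) \<circ> h \<in> H" using grp_comp[OF assms(1) h0 h(1)] .
      ultimately show "x \<in> lcoset a H" by (auto simp: lcoset_def)
    qed
  qed
qed

lemma card_fibers:
  assumes "finite A" "\<And>y. y \<in> f ` A \<Longrightarrow> card {x\<in>A. f x = y} = k"
  shows "card A = card (f ` A) * k"
proof -
  have A: "A = (\<Union>y\<in>f ` A. {x\<in>A. f x = y})" by auto
  have "card A = (\<Sum>y\<in>f ` A. card {x\<in>A. f x = y})"
    by (subst A, rule card_UN_disjoint) (use assms(1) in auto)
  also have "\<dots> = card (f ` A) * k" using assms(2) by simp
  finally show ?thesis .
qed

lemma hom_count:
  assumes H: "grp H" "finite H"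
    and hom: "\<And>x y. x \<in> H \<Longrightarrow> y \<in> H \<Longrightarrow> f (x \<circ> y) = mul (f x) (f y)"
    and canc: "\<And>a b c. a \<in> f ` H \<Longrightarrow> mul a b = mul a c \<Longrightarrow> b = c"
  shows "card H = card (f ` H) * card {k\<in>H. f k = f id}"
proof (rule card_fibers[OF H(2)])
  fix y assume "y \<in> f ` H"
  then obtain h0 where h0: "h0 \<in> H" "y = f h0" by auto
  have b0: "bij h0" using grp_bij[OF H(1) h0(1)] .
  have fh0: "f h0 = mul (f h0) (f id)" using hom[OF h0(1) grp_id[OF H(1)]] by simp
  have "{x\<in>H. f x = y} = (\<lambda>k. h0 \<circ> k) ` {k\<in>H. f k = f id}"
  proof
    show "{x\<in>H. f x = y} \<subseteq> (\<lambda>k. h0 \<circ> k) ` {k\<in>H. f k = f id}"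
    proof
      fix x assume x: "x \<in> {x\<in>H. f x = y}"
      define k where "k = inv h0 \<circ> x"
      have kH: "k \<in> H" unfolding k_def using x grp_comp[OF H(1) grp_inv[OF H(1) h0(1)]] by auto
      have xk: "x = h0 \<circ> k" unfolding k_def using b0 by (simp add: comp_inv_cancel2)
      have "mul (f h0) (f k) = mul (f h0) (f id)"
        using hom[OF h0(1) kH] xk x h0(2) fh0 by auto
      hence "f k = f id" using canc h0(1) by blast
      thus "x \<in> (\<lambda>k. h0 \<circ> k) ` {k\<in>H. f k = f id}" using kH xk by auto
    qed
  next
    show "(\<lambda>k. h0 \<circ> k) ` {k\<in>H. f k = f id} \<subseteq> {x\<in>H. f x = y}"
      using hom[OF h0(1)] fh0 h0(2) grp_comp[OF H(1) h0(1)] by auto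
  qed
  moreover have "inj_on (\<lambda>k. h0 \<circ> k) {k\<in>H. f k = f id}"
    by (rule inj_onI) (use comp_left_cancel[OF b0] in auto)
  ultimately show "card {x\<in>H. f x = y} = card {k\<in>H. f k = f id}"
    by (simp add: card_image)
qed

definition sof :: "('a::field, 'n::finite) vmap \<Rightarrow> ('a \<Rightarrow> 'a)" where
  "sof g = (SOME s. field_aut s \<and> semilinear s g)"

lemma sof:
  assumes "g \<in> GammaL"
  shows "field_aut (sof g)" "semilinear (sof g) g"
proof -
  have "\<exists>s. field_aut s \<and> semilinear s g" using assms by (auto simp: GammaL_def)
  hence "field_aut (sof g) \<and> semilinear (sof g) g" unfolding sof_def by (rule someI_ex)
  thus "field_aut (sof g)" "semilinear (sof g) g" by auto
qed

lemma GammaL_bij: "g \<in> GammaL \<Longrightarrow> bij g" by (simp add: GammaL_def)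

lemma sof_eq:
  assumes "g \<in> GammaL" "semilinear s g"
  shows "sof g = s"
proof -
  have b: "bij g" using GammaL_bij[OF assms(1)] .
  have "g (std_basis undefined) \<noteq> 0"
  proof
    assume "g (std_basis undefined) = 0"
    hence "g (std_basis undefined) = g 0" using sl_0[OF assms(2)] by simp
    hence "std_basis undefined = (0::'a^'b)" using bij_is_inj[OF b] by (metis injD)
    thus False using std_basis_nz by blast
  qed
  thus ?thesis using sl_unique[OF sof(2)[OF assms(1)] assms(2)] by blast
qed

lemma GammaL_comp:
  assumes "g \<in> GammaL" "h \<in> GammaL"
  shows "g \<circ> h \<in> GammaL" "sof (g \<circ> h) = sof g \<circ> sof h"
proof -
  have sl: "semilinear (sof g \<circ> sof h) (g \<circ> h)" using sl_comp sof(2) assms by blast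
  have fa: "field_aut (sof g \<circ> sof h)" using fa_comp sof(1) assms by blast
  show gh: "g \<circ> h \<in> GammaL" using sl fa assms GammaL_bij bij_comp unfolding GammaL_def by blast
  show "sof (g \<circ> h) = sof g \<circ> sof h" using sof_eq[OF gh sl] .
qed

lemma GL_GammaL: "GL \<subseteq> GammaL"
  by (auto simp: GL_def GammaL_def intro: fa_id)

lemma GL_iff_sof: "g \<in> GammaL \<Longrightarrow> g \<in> GL \<longleftrightarrow> sof g = id"
  using sof_eq[of g id] sof(2)[of g] GammaL_bij[of g] by (auto simp: GL_def)

lemma sof_id: "sof (id :: ('a::field,'n::finite) vmap) = id"
  using GL_iff_sof[of id] GL_GammaL sl_id by (auto simp: GL_def)

lemma sof_inv:
  assumes "g \<in> GammaL" "inv g \<in> GammaL"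
  shows "sof (inv g) = inv (sof g)" "sof g \<circ> sof (inv g) = id" "sof (inv g) \<circ> sof g = id"
proof -
  have b: "bij g" using GammaL_bij[OF assms(1)] .
  have "sof g \<circ> sof (inv g) = id"
    using GammaL_comp(2)[OF assms] comp_inv_cancel[OF b] sof_id by metis
  moreover have "sof (inv g) \<circ> sof g = id"
    using GammaL_comp(2)[OF assms(2,1)] inv_comp_cancel[OF b] sof_id by metis
  ultimately show "sof (inv g) = inv (sof g)" "sof g \<circ> sof (inv g) = id" "sof (inv g) \<circ> sof g = id"
    by (auto simp: inv_unique_comp)
qed


section \<open>Subgroups of the cyclic group F^*\<close>

definition msub :: "'a::field set \<Rightarrow> bool" where
  "msub S \<longleftrightarrow> 1 \<in> S \<and> (\<forall>x\<in>S. \<forall>y\<in>S. x * y \<in> S) \<and> 0 \<notin> S"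

lemma msub_pow: "msub S \<Longrightarrow> x \<in> S \<Longrightarrow> x ^ k \<in> S"
  by (induction k) (auto simp: msub_def)

locale cyc =
  fixes mu :: "'a::{field,finite}"
  assumes gen: "\<forall>x. x \<noteq> 0 \<longrightarrow> (\<exists>k. x = mu ^ k)"
    and mu_nz: "mu \<noteq> 0"
begin

lemma pow_split: "i \<le> j \<Longrightarrow> mu ^ j = mu ^ i * mu ^ (j - i)"
  by (metis le_add_diff_inverse power_add)

definition ordm :: nat where "ordm = (LEAST k. 0 < k \<and> mu ^ k = 1)"

lemma ex_ord: "\<exists>k. 0 < k \<and> mu ^ k = 1"
proof -
  have "\<not> inj (\<lambda>k::nat. mu ^ k)"
  proof
    assume "inj (\<lambda>k::nat. mu ^ k)"
    hence "infinite (range (\<lambda>k::nat. mu ^ k))" using finite_imageD by blast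
    thus False by simp
  qed
  then obtain i j :: nat where ij: "i \<noteq> j" "mu ^ i = mu ^ j" unfolding inj_def by blast
  { fix i j :: nat assume "i < j" "mu ^ i = mu ^ j"
    hence "mu ^ i * mu ^ (j - i) = mu ^ i * 1" using pow_split[of i j] by simp
    hence "mu ^ (j - i) = 1" using mu_nz by simp
    hence "\<exists>k. 0 < k \<and> mu ^ k = 1" using \<open>i < j\<close> by (intro exI[of _ "j - i"]) simp }
  thus ?thesis using ij by (metis linorder_neqE_nat)
qed

lemma ordm: "0 < ordm" "mu ^ ordm = 1"
  using LeastI_ex[OF ex_ord] unfolding ordm_def by auto

lemma ordm_least: "0 < k \<Longrightarrow> k < ordm \<Longrightarrow> mu ^ k \<noteq> 1"
  apply (rule notI)
proof -
  assume "0 < k" "k < ordm" "mu ^ k = 1"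
  hence "ordm \<le> k" unfolding ordm_def by (intro Least_le) simp
  thus False using \<open>k < ordm\<close> by simp
qed

lemma pow_eq1_iff: "mu ^ k = 1 \<longleftrightarrow> ordm dvd k"
proof
  assume k: "mu ^ k = 1"
  have "mu ^ k = mu ^ (ordm * (k div ordm) + k mod ordm)" by simp
  also have "\<dots> = (mu ^ ordm) ^ (k div ordm) * mu ^ (k mod ordm)" by (simp only: power_add power_mult)
  finally have "mu ^ k = (mu ^ ordm) ^ (k div ordm) * mu ^ (k mod ordm)" .
  hence "mu ^ (k mod ordm) = 1" using k ordm by simp
  hence "k mod ordm = 0" using ordm_least[of "k mod ordm"] ordm(1) by (metis mod_less_divisor neq0_conv)
  thus "ordm dvd k" by auto
next
  assume "ordm dvd k" thus "mu ^ k = 1" using ordm by (auto simp: power_mult)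
qed

lemma pow_inv: "mu ^ k * mu ^ (k * (ordm - 1)) = 1"
proof -
  have "mu ^ k * mu ^ (k * (ordm - 1)) = mu ^ (k * ordm)"
    using ordm(1) by (simp add: power_add[symmetric]) (metis Suc_pred mult_Suc_right)
  thus ?thesis by (simp add: power_mult[symmetric] ordm(2)) (metis ordm(2) power_mult power_one mult.commute)
qed

lemma pow_eq_dvd:
  assumes "mu ^ k = mu ^ l" "g dvd ordm" "g dvd l"
  shows "g dvd k"
proof (cases "k \<le> l")
  case True
  hence "mu ^ k * mu ^ (l - k) = mu ^ k * 1" using assms(1) pow_split[of k l] by simp
  hence "mu ^ (l - k) = 1" using mu_nz by simp
  hence "ordm dvd l - k" using pow_eq1_iff by blast
  hence "g dvd l - k" using assms(2) dvd_trans by blast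
  thus ?thesis using assms(3) True by (metis dvd_diff_nat diff_diff_cancel)
next
  case False
  hence "mu ^ l * mu ^ (k - l) = mu ^ l * 1" using assms(1) pow_split[of l k] by simp
  hence "mu ^ (k - l) = 1" using mu_nz by simp
  hence "ordm dvd k - l" using pow_eq1_iff by blast
  hence "g dvd k - l" using assms(2) dvd_trans by blast
  thus ?thesis using assms(3) False by (metis dvd_add le_add_diff_inverse nat_le_linear)
qed

lemma pow_inj: "i < ordm \<Longrightarrow> j < ordm \<Longrightarrow> mu ^ i = mu ^ j \<Longrightarrow> i = j"
proof -
  assume a: "i < ordm" "j < ordm" "mu ^ i = mu ^ j"
  { fix i j assume "i < j" "j < ordm" "mu ^ i = mu ^ j"
    hence "mu ^ i * mu ^ (j - i) = mu ^ i * 1" using pow_split[of i j] by simp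
    hence "mu ^ (j - i) = 1" using mu_nz by simp
    hence False using ordm_least[of "j - i"] \<open>i < j\<close> \<open>j < ordm\<close> by simp }
  thus "i = j" using a by (metis linorder_neqE_nat)
qed

definition dS :: "'a set \<Rightarrow> nat" where "dS S = (LEAST d. 0 < d \<and> mu ^ d \<in> S)"

lemma dS:
  assumes "msub S"
  shows "0 < dS S" "mu ^ dS S \<in> S"
proof -
  have "\<exists>d. 0 < d \<and> mu ^ d \<in> S" using ordm assms by (auto simp: msub_def)
  thus "0 < dS S" "mu ^ dS S \<in> S" using LeastI_ex unfolding dS_def by (metis (mono_tags, lifting))+
qed

lemma dS_least: "0 < k \<Longrightarrow> k < dS S \<Longrightarrow> mu ^ k \<notin> S"
  apply (rule notI)
proof -
  assume "0 < k" "k < dS S" "mu ^ k \<in> S"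
  hence "dS S \<le> k" unfolding dS_def by (intro Least_le) simp
  thus False using \<open>k < dS S\<close> by simp
qed

lemma mem_iff:
  assumes "msub S"
  shows "mu ^ k \<in> S \<longleftrightarrow> dS S dvd k"
proof
  assume k: "mu ^ k \<in> S"
  define d where "d = dS S"
  define q where "q = k div d"
  define r where "r = k mod d"
  have kd: "k = d * q + r" unfolding q_def r_def by simp
  have a: "mu ^ (d * q * (ordm - 1)) \<in> S"
    using msub_pow[OF assms dS(2)[OF assms]] unfolding d_def by (metis power_mult)
  have "mu ^ r = mu ^ r * (mu ^ (d * q) * mu ^ (d * q * (ordm - 1)))" using pow_inv by simp
  also have "\<dots> = mu ^ k * mu ^ (d * q * (ordm - 1))"
    by (simp add: kd power_add mult_ac)
  finally have "mu ^ r \<in> S" using k a assms by (auto simp: msub_def)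
  moreover have "r < d" unfolding r_def d_def using dS(1)[OF assms] by simp
  ultimately have "r = 0" using dS_least[of r S] unfolding d_def by auto
  thus "dS S dvd k" unfolding d_def r_def by (simp add: d_def dvd_eq_mod_eq_0)
next
  assume "dS S dvd k"
  then obtain j where "k = dS S * j" by auto
  thus "mu ^ k \<in> S" using msub_pow[OF assms dS(2)[OF assms]] by (simp add: power_mult)
qed

lemma dS_dvd_ord: "msub S \<Longrightarrow> dS S dvd ordm"
  using mem_iff[of S ordm] ordm by (auto simp: msub_def)

lemma msub_inverse: "msub (S::'a set) \<Longrightarrow> x \<in> S \<Longrightarrow> inverse x \<in> S"
proof -
  assume S: "msub S" and x: "x \<in> S"
  have "x \<noteq> 0" using S x by (auto simp: msub_def)
  then obtain k where k: "x = mu ^ k" using gen by blast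
  have "dS S dvd k" using mem_iff[OF S] x k by simp
  hence "mu ^ (k * (ordm - 1)) \<in> S" using mem_iff[OF S] by simp
  moreover have "inverse x = mu ^ (k * (ordm - 1))" using pow_inv[of k] k by (metis inverse_unique)
  ultimately show ?thesis by simp
qed

lemma card_msub:
  assumes "msub S"
  shows "card S = ordm div dS S"
proof -
  define d where "d = dS S"
  have d0: "0 < d" using dS(1)[OF assms] d_def by simp
  obtain r where r: "ordm = d * r" using dS_dvd_ord[OF assms] d_def by auto
  have S: "S = (\<lambda>j. mu ^ (d * j)) ` {..< r}"
  proof
    show "S \<subseteq> (\<lambda>j. mu ^ (d * j)) ` {..< r}"
    proof
      fix x assume x: "x \<in> S"
      have "x \<noteq> 0" using assms x by (auto simp: msub_def)
      then obtain k where k: "x = mu ^ k" using gen by blast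
      have "d dvd k" using mem_iff[OF assms] x k d_def by simp
      then obtain j where j: "k = d * j" by auto
      have "mu ^ (d * j) = mu ^ (ordm * (j div r)) * mu ^ (d * (j mod r))"
        by (simp add: r power_add[symmetric]) (metis add_mult_distrib2 div_mult_mod_eq mult.assoc mult.commute)
      also have "\<dots> = mu ^ (d * (j mod r))" by (simp add: power_mult ordm(2))
      finally have "x = mu ^ (d * (j mod r))" using k j by simp
      moreover have "j mod r < r" using r ordm(1) by (metis mod_less_divisor mult_0_right neq0_conv)
      ultimately show "x \<in> (\<lambda>j. mu ^ (d * j)) ` {..< r}" by auto
    qed
  next
    show "(\<lambda>j. mu ^ (d * j)) ` {..< r} \<subseteq> S"
    proof clarify
      fix j show "mu ^ (d * j) \<in> S" using mem_iff[OF assms, of "d * j"] d_def by simp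
    qed
  qed
  have "inj_on (\<lambda>j. mu ^ (d * j)) {..< r}"
  proof (rule inj_onI)
    fix i j assume "i \<in> {..<r}" "j \<in> {..<r}" "mu ^ (d * i) = mu ^ (d * j)"
    moreover have "d * i < ordm" "d * j < ordm" using calculation(1,2) r d0 by auto
    ultimately have "d * i = d * j" using pow_inj by blast
    thus "i = j" using d0 by simp
  qed
  hence "card S = r" using S by (simp add: card_image)
  thus ?thesis using r d0 d_def by simp
qed

definition mprod :: "'a set \<Rightarrow> 'a set \<Rightarrow> 'a set" where
  "mprod P K = {p * k | p k. p \<in> P \<and> k \<in> K}"

lemma mprod_iff:
  assumes P: "msub P" and K: "msub K"
  shows "mu ^ k \<in> mprod P K \<longleftrightarrow> gcd (dS P) (dS K) dvd k"
proof
  assume "mu ^ k \<in> mprod P K"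
  then obtain p q where pq: "p \<in> P" "q \<in> K" "mu ^ k = p * q" by (auto simp: mprod_def)
  have "p \<noteq> 0" "q \<noteq> 0" using pq P K by (auto simp: msub_def)
  then obtain i j where ij: "p = mu ^ i" "q = mu ^ j" using gen by blast
  have "dS P dvd i" "dS K dvd j" using mem_iff[OF P] mem_iff[OF K] pq ij by auto
  hence "gcd (dS P) (dS K) dvd i + j" by (meson dvd_add gcd_dvd1 gcd_dvd2 dvd_trans)
  moreover have "mu ^ k = mu ^ (i + j)" using pq ij by (simp add: power_add)
  moreover have "gcd (dS P) (dS K) dvd ordm" using dS_dvd_ord[OF P] by (meson gcd_dvd1 dvd_trans)
  ultimately show "gcd (dS P) (dS K) dvd k" using pow_eq_dvd by blast
next
  assume "gcd (dS P) (dS K) dvd k"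
  then obtain c where c: "k = gcd (dS P) (dS K) * c" by auto
  obtain a b where ab: "dS P * a = dS K * b + gcd (dS P) (dS K)"
    using bezout_nat[of "dS P" "dS K"] dS(1)[OF P] by auto
  have "dS P * a * c = dS K * b * c + k" using ab c by (metis add_mult_distrib mult.commute mult.left_commute)
  hence "mu ^ (dS P * a * c) = mu ^ (dS K * b * c) * mu ^ k"
    by (simp add: power_add)
  hence "mu ^ k = mu ^ (dS P * a * c) * mu ^ (dS K * b * c * (ordm - 1))"
    using pow_inv[of "dS K * b * c"] by (simp add: mult_ac)
  moreover have "mu ^ (dS P * a * c) \<in> P" using mem_iff[OF P] by simp
  moreover have "mu ^ (dS K * b * c * (ordm - 1)) \<in> K" using mem_iff[OF K] by simp
  ultimately show "mu ^ k \<in> mprod P K" by (auto simp: mprod_def)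
qed

lemma msub_subset_dvd:
  assumes "msub S" "msub T" "S \<subseteq> T"
  shows "dS T dvd dS S"
  using mem_iff[OF assms(2)] dS(2)[OF assms(1)] assms(3) by auto

theorem cyc_main:
  assumes D: "msub D" and P: "msub P" and K: "msub K" and PD: "P \<subseteq> D" and KD: "K \<subseteq> D"
  shows "D \<subseteq> mprod P K \<longleftrightarrow> coprime (card D div card K) (card D div card P)"
proof -
  define dd where "dd = dS D"
  define dp where "dp = dS P"
  define dk where "dk = dS K"
  have dd0: "0 < dd" using dS(1)[OF D] dd_def by simp
  obtain a where a: "dp = dd * a" using msub_subset_dvd[OF P D PD] dd_def dp_def by auto
  obtain b where b: "dk = dd * b" using msub_subset_dvd[OF K D KD] dd_def dk_def by auto
  obtain rk where rk: "ordm = dk * rk" using dS_dvd_ord[OF K] dk_def by auto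
  obtain rp where rp: "ordm = dp * rp" using dS_dvd_ord[OF P] dp_def by auto
  have rk0: "0 < rk" "0 < rp" using rk rp ordm(1) by (auto intro!: Nat.gr0I)
  have b0: "0 < b" "0 < a" using rk rp b a ordm(1) by (auto intro!: Nat.gr0I)
  have cK: "card D div card K = b"
    using card_msub[OF D] card_msub[OF K] rk b dd0 rk0 dd_def dk_def by simp
  have cP: "card D div card P = a"
    using card_msub[OF D] card_msub[OF P] rp a dd0 rk0 dd_def dp_def by simp
  have "D \<subseteq> mprod P K \<longleftrightarrow> gcd dp dk dvd dd"
  proof
    assume "D \<subseteq> mprod P K"
    hence "mu ^ dd \<in> mprod P K" using dS(2)[OF D] dd_def by auto
    thus "gcd dp dk dvd dd" using mprod_iff[OF P K] dp_def dk_def by simp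
  next
    assume g: "gcd dp dk dvd dd"
    show "D \<subseteq> mprod P K"
    proof
      fix x assume x: "x \<in> D"
      have "x \<noteq> 0" using D x by (auto simp: msub_def)
      then obtain k where k: "x = mu ^ k" using gen by blast
      have "dd dvd k" using mem_iff[OF D] x k dd_def by simp
      hence "gcd dp dk dvd k" using g dvd_trans by blast
      thus "x \<in> mprod P K" using mprod_iff[OF P K] k dp_def dk_def by simp
    qed
  qed
  also have "\<dots> \<longleftrightarrow> coprime b a"
  proof -
    have "gcd dp dk = dd * gcd a b" using a b by (simp add: gcd_mult_distrib_nat)
    hence "gcd dp dk dvd dd \<longleftrightarrow> gcd a b dvd 1" using dd0 by simp
    thus ?thesis by (simp add: coprime_iff_gcd_eq_1 gcd.commute)
  qed
  finally show ?thesis using cK cP by simp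
qed

end

lemma card_cosets:
  assumes "msub P" "msub D" "P \<subseteq> D" "finite D" "\<And>x. x \<in> P \<Longrightarrow> inverse x \<in> P"
  shows "card ((\<lambda>\<delta>. (\<lambda>y. \<delta> * y) ` P) ` D) = card D div card P"
proof -
  have cP: "card P > 0" using assms(1,3,4) finite_subset by (auto simp: msub_def card_gt_0_iff)
  have "card D = card ((\<lambda>\<delta>. (\<lambda>y. \<delta> * y) ` P) ` D) * card P"
  proof (rule card_fibers[OF assms(4)])
    fix Y assume "Y \<in> (\<lambda>\<delta>. (\<lambda>y. \<delta> * y) ` P) ` D"
    then obtain d0 where d0: "d0 \<in> D" "Y = (\<lambda>y. d0 * y) ` P" by auto
    have d0nz: "d0 \<noteq> 0" using assms(2) d0 by (auto simp: msub_def)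
    have pP: "(\<lambda>y. p * y) ` P = P" if "p \<in> P" for p
    proof
      show "(\<lambda>y. p * y) ` P \<subseteq> P" using assms(1) that by (auto simp: msub_def)
      show "P \<subseteq> (\<lambda>y. p * y) ` P"
      proof
        fix y assume y: "y \<in> P"
        have "p \<noteq> 0" using assms(1) that by (auto simp: msub_def)
        hence "y = p * (inverse p * y)" by simp
        moreover have "inverse p * y \<in> P" using assms(1,5) that y by (auto simp: msub_def)
        ultimately show "y \<in> (\<lambda>y. p * y) ` P" by blast
      qed
    qed
    have "{x \<in> D. (\<lambda>y. x * y) ` P = Y} = (\<lambda>y. d0 * y) ` P"
    proof
      show "{x \<in> D. (\<lambda>y. x * y) ` P = Y} \<subseteq> (\<lambda>y. d0 * y) ` P"
      proof
        fix x assume "x \<in> {x \<in> D. (\<lambda>y. x * y) ` P = Y}"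
        hence "x * 1 \<in> Y" using assms(1) by (auto simp: msub_def)
        thus "x \<in> (\<lambda>y. d0 * y) ` P" using d0 by simp
      qed
    next
      show "(\<lambda>y. d0 * y) ` P \<subseteq> {x \<in> D. (\<lambda>y. x * y) ` P = Y}"
      proof
        fix x assume "x \<in> (\<lambda>y. d0 * y) ` P"
        then obtain p where p: "p \<in> P" "x = d0 * p" by auto
        have "x \<in> D" using p d0 assms(2,3) by (auto simp: msub_def)
        moreover have "(\<lambda>y. x * y) ` P = (\<lambda>y. d0 * y) ` ((\<lambda>y. p * y) ` P)"
          using p by (auto simp: image_image mult.assoc)
        ultimately show "x \<in> {x \<in> D. (\<lambda>y. x * y) ` P = Y}" using pP[OF p(1)] d0 by simp
      qed
    qed
    moreover have "inj_on (\<lambda>y. d0 * y) P" using d0nz by (auto simp: inj_on_def)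
    ultimately show "card {x \<in> D. (\<lambda>y. x * y) ` P = Y} = card P" by (simp add: card_image)
  qed
  thus ?thesis using cP by simp
qed


lemma SL_GL: "g \<in> SL \<Longrightarrow> g \<in> GL" by (simp add: SL_def)
lemma GL_bij: "g \<in> GL \<Longrightarrow> bij g" by (simp add: GL_def)
lemma GL_sl: "g \<in> GL \<Longrightarrow> semilinear id g" by (simp add: GL_def)
lemma SL_gdet: "g \<in> SL \<Longrightarrow> gdet g = 1" by (simp add: SL_def)

lemma gdet_comp_lin: "semilinear id g \<Longrightarrow> gdet (g \<circ> h) = gdet g * gdet h"
  using gdet_comp[of id g h] fa_id by simp

lemma GL_comp: "g \<in> GL \<Longrightarrow> h \<in> GL \<Longrightarrow> g \<circ> h \<in> GL"
  using sl_comp[of id g id h] by (auto simp: GL_def bij_comp)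

lemma SL_comp: "g \<in> SL \<Longrightarrow> h \<in> SL \<Longrightarrow> g \<circ> h \<in> SL"
  using GL_comp[of g h] gdet_comp_lin[of g h] by (auto simp: SL_def GL_def)

lemma lin_scale: "semilinear id g \<Longrightarrow> g (c *s x) = c *s g x"
  using sl_scale[of id g c x] by simp

lemma line0_iff: "x \<in> line0 i0 \<longleftrightarrow> x = (x $ i0) *s std_basis i0"
proof
  assume "x \<in> line0 i0"
  then obtain c where "x = c *s std_basis i0" by (auto simp: line0_def)
  thus "x = (x $ i0) *s std_basis i0" by (simp add: std_basis_comp)
qed (auto simp: line0_def)

lemma line0_I: "c *s std_basis i0 \<in> line0 i0" by (auto simp: line0_def)

locale setting =
  fixes G :: "('a::{field,finite}, 'n::finite) vmap set" and i0 :: 'n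
  assumes Gsub: "is_subgroup G" and ZSL: "setprod Zsc SL \<subseteq> G" and N3: "CARD('n) \<ge> 3"
begin

abbreviation "e \<equiv> (std_basis :: 'n \<Rightarrow> 'a^'n)"
abbreviation "B \<equiv> stab0 i0 G"

lemma grpG: "grp G" using grp_subgroup[OF Gsub] .
lemma G_GammaL: "g \<in> G \<Longrightarrow> g \<in> GammaL" using Gsub by (auto simp: is_subgroup_def)
lemma G_comp: "g \<in> G \<Longrightarrow> h \<in> G \<Longrightarrow> g \<circ> h \<in> G" using grp_comp[OF grpG] .
lemma G_inv: "g \<in> G \<Longrightarrow> inv g \<in> G" using grp_inv[OF grpG] .
lemma G_id: "id \<in> G" using grp_id[OF grpG] .
lemma G_bij: "g \<in> G \<Longrightarrow> bij g" using grp_bij[OF grpG] .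
lemma G_sof: "g \<in> G \<Longrightarrow> field_aut (sof g)" "g \<in> G \<Longrightarrow> semilinear (sof g) g"
  using sof G_GammaL by blast+
lemma G_sof_comp: "g \<in> G \<Longrightarrow> h \<in> G \<Longrightarrow> sof (g \<circ> h) = sof g \<circ> sof h"
  using GammaL_comp(2) G_GammaL by blast
lemma G_sof_inv: "g \<in> G \<Longrightarrow> sof (inv g) = inv (sof g)"
  "g \<in> G \<Longrightarrow> sof g \<circ> sof (inv g) = id" "g \<in> G \<Longrightarrow> sof (inv g) \<circ> sof g = id"
  using sof_inv G_GammaL G_inv by blast+
lemma G_GL_iff: "g \<in> G \<Longrightarrow> g \<in> GL \<longleftrightarrow> sof g = id"
  using GL_iff_sof G_GammaL by blast

lemma Zsc_G: "Zsc \<subseteq> G"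
proof
  fix z :: "('a,'n) vmap" assume "z \<in> Zsc"
  moreover have "id \<in> SL" using sl_id gdet_id by (auto simp: SL_def GL_def)
  ultimately have "z \<circ> id \<in> setprod Zsc SL" unfolding setprod_def by blast
  thus "z \<in> G" using ZSL by auto
qed

lemma SL_G: "SL \<subseteq> G"
proof
  fix g :: "('a,'n) vmap" assume "g \<in> SL"
  moreover have "id \<in> Zsc" using sc_Zsc[of 1] by (simp add: sc_def id_def)
  ultimately have "id \<circ> g \<in> setprod Zsc SL" unfolding setprod_def by blast
  thus "g \<in> G" using ZSL by auto
qed

lemma GL_inv: "g \<in> G \<Longrightarrow> g \<in> GL \<Longrightarrow> inv g \<in> GL"
  using G_GL_iff G_inv G_sof_inv(1) by auto

lemma gdet_inv: "g \<in> G \<Longrightarrow> g \<in> GL \<Longrightarrow> gdet g * gdet (inv g) = 1"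
  using gdet_comp_lin[OF GL_sl, of g "inv g"] comp_inv_cancel[OF G_bij] gdet_id by metis

lemma gdet_nz: "g \<in> G \<Longrightarrow> g \<in> GL \<Longrightarrow> gdet g \<noteq> 0"
  using gdet_inv by force

lemma gdet_G_comp: "g \<in> G \<Longrightarrow> gdet (g \<circ> h) = gdet g * sof g (gdet h)"
  using gdet_comp G_sof by blast

definition i1 :: 'n where "i1 = (SOME i. i \<noteq> i0)"
definition i2 :: 'n where "i2 = (SOME i. i \<noteq> i0 \<and> i \<noteq> i1)"

lemma ex_other: "\<exists>i::'n. i \<noteq> a \<and> i \<noteq> b"
proof -
  have "card {a, b} \<le> 2" by (cases "a = b") auto
  hence "card {a, b} < card (UNIV :: 'n set)" using N3 by linarith
  hence "{a, b} \<noteq> UNIV" by auto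
  thus ?thesis by auto
qed

lemma i1: "i1 \<noteq> i0" unfolding i1_def using ex_other[of i0 i0] by (metis (mono_tags, lifting) someI_ex)
lemma i2: "i2 \<noteq> i0" "i2 \<noteq> i1" unfolding i2_def using ex_other[of i0 i1] by (metis (mono_tags, lifting) someI_ex)+

end

context setting begin

lemma B_G: "g \<in> B \<Longrightarrow> g \<in> G" by (simp add: stab0_def)

lemma G_nz: "g \<in> G \<Longrightarrow> x \<noteq> 0 \<Longrightarrow> g x \<noteq> 0"
  using G_bij sl_0[OF G_sof(2)] by (metis bij_is_inj injD)

lemma B_I:
  assumes g: "g \<in> G" and ge: "g (e i0) \<in> line0 i0"
  shows "g \<in> B"
proof -
  define s where "s = sof g"
  have s: "field_aut s" "semilinear s g" using G_sof g s_def by auto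
  define a where "a = g (e i0) $ i0"
  have ga: "g (e i0) = a *s e i0" using ge line0_iff a_def by blast
  have a0: "a \<noteq> 0" using G_nz[OF g std_basis_nz[of i0]] ga by auto
  have "g ` line0 i0 = line0 i0"
  proof
    show "g ` line0 i0 \<subseteq> line0 i0"
    proof
      fix y :: "'a^'n" assume "y \<in> g ` line0 i0"
      then obtain c where "y = g (c *s e i0)" by (auto simp: line0_def)
      hence "y = (s c * a) *s e i0" using sl_scale[OF s(2)] ga by simp
      thus "y \<in> line0 i0" using line0_I by blast
    qed
  next
    show "line0 i0 \<subseteq> g ` line0 i0"
    proof
      fix y :: "'a^'n" assume "y \<in> line0 i0"
      then obtain d where y: "y = d *s e i0" by (auto simp: line0_def)
      define c where "c = inv s (d / a)"
      have "s c = d / a" unfolding c_def using fa_bij[OF s(1)] by (simp add: bij_is_surj surj_f_inv_f)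
      hence "g (c *s e i0) = y" using sl_scale[OF s(2)] ga y a0 by simp
      thus "y \<in> g ` line0 i0" using line0_I by (metis image_eqI)
    qed
  qed
  thus ?thesis using g by (simp add: stab0_def)
qed

lemma B_iff: "g \<in> G \<Longrightarrow> g \<in> B \<longleftrightarrow> g (e i0) \<in> line0 i0"
proof
  assume "g \<in> B"
  hence "g ` line0 i0 = line0 i0" by (simp add: stab0_def)
  moreover have "e i0 \<in> line0 i0" using line0_I[of 1 i0] by simp
  ultimately show "g (e i0) \<in> line0 i0" by blast
qed (rule B_I)

lemma grpB: "grp B"
proof -
  have "id \<in> B" using G_id by (simp add: stab0_def)
  moreover have "\<forall>g\<in>B. \<forall>h\<in>B. g \<circ> h \<in> B"
  proof (intro ballI)
    fix g h assume g: "g \<in> B" and h: "h \<in> B"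
    have "(g \<circ> h) ` line0 i0 = g ` (h ` line0 i0)" by (simp add: image_comp)
    also have "\<dots> = line0 i0" using g h by (simp add: stab0_def)
    finally show "g \<circ> h \<in> B" using G_comp g h by (simp add: stab0_def)
  qed
  moreover have "\<forall>g\<in>B. inv g \<in> B"
  proof
    fix g assume g: "g \<in> B"
    hence "inv g ` line0 i0 = inv g ` (g ` line0 i0)" by (simp add: stab0_def)
    also have "\<dots> = line0 i0" using G_bij[OF B_G[OF g]] by (simp add: image_comp inv_comp_cancel)
    moreover have "inv g \<in> G" using G_inv B_G g by blast
    ultimately show "inv g \<in> B" by (simp add: stab0_def)
  qed
  moreover have "\<forall>g\<in>B. bij g" using G_bij B_G by blast
  ultimately show ?thesis by (simp add: grp_def)
qed

lemma B_comp: "g \<in> B \<Longrightarrow> h \<in> B \<Longrightarrow> g \<circ> h \<in> B" using grp_comp[OF grpB] .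
lemma B_inv: "g \<in> B \<Longrightarrow> inv g \<in> B" using grp_inv[OF grpB] .
lemma B_id: "id \<in> B" using grp_id[OF grpB] .

definition avl :: "('a,'n) vmap \<Rightarrow> 'a" where "avl g = g (e i0) $ i0"

lemma avl: "g \<in> B \<Longrightarrow> g (e i0) = avl g *s e i0" "g \<in> B \<Longrightarrow> avl g \<noteq> 0"
proof -
  assume g: "g \<in> B"
  have "g (e i0) \<in> line0 i0" using B_iff[OF B_G[OF g]] g by blast
  thus ge: "g (e i0) = avl g *s e i0" using line0_iff unfolding avl_def by blast
  show "avl g \<noteq> 0" using G_nz[OF B_G[OF g] std_basis_nz[of i0]] ge by auto
qed

lemma avl_comp: "g \<in> B \<Longrightarrow> h \<in> B \<Longrightarrow> avl (g \<circ> h) = avl g * sof g (avl h)"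
proof -
  assume g: "g \<in> B" and h: "h \<in> B"
  have "(g \<circ> h) (e i0) = (sof g (avl h) * avl g) *s e i0"
    using avl(1)[OF g] avl(1)[OF h] sl_scale[OF G_sof(2)[OF B_G[OF g]]] by simp
  thus ?thesis unfolding avl_def by (simp add: std_basis_comp mult.commute)
qed

lemma avl_id: "avl id = 1" by (simp add: avl_def std_basis_comp)

definition psi :: "('a,'n) vmap \<Rightarrow> 'a" where "psi g = gdet g / avl g ^ CARD('n)"

lemma psi_comp:
  assumes g: "g \<in> B" and h: "h \<in> B"
  shows "psi (g \<circ> h) = psi g * sof g (psi h)"
proof -
  have s: "field_aut (sof g)" using G_sof B_G g by blast
  have "psi (g \<circ> h) = gdet g * sof g (gdet h) / (avl g * sof g (avl h)) ^ CARD('n)"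
    unfolding psi_def using gdet_G_comp[OF B_G[OF g]] avl_comp[OF g h] by simp
  also have "\<dots> = (gdet g / avl g ^ CARD('n)) * (sof g (gdet h) / sof g (avl h) ^ CARD('n))"
    by (simp add: power_mult_distrib)
  also have "\<dots> = psi g * sof g (psi h)"
    unfolding psi_def by (simp add: fa_divide[OF s] fa_power[OF s])
  finally show ?thesis .
qed

lemma psi_id: "psi id = 1" by (simp add: psi_def gdet_id avl_id)

lemma psi_inv: "g \<in> B \<Longrightarrow> psi g * sof g (psi (inv g)) = 1"
  using psi_comp[OF _ B_inv, of g] comp_inv_cancel[OF G_bij[OF B_G]] psi_id by metis

lemma psi_nz: "g \<in> B \<Longrightarrow> psi g \<noteq> 0"
  using psi_inv by force

lemma psi_lin_comp: "g \<in> B \<Longrightarrow> h \<in> B \<Longrightarrow> g \<in> GL \<Longrightarrow> psi (g \<circ> h) = psi g * psi h"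
  using psi_comp G_GL_iff B_G by simp

lemma psi_ratio:
  assumes w: "w \<in> B" and l: "l \<in> B" and s: "sof w = sof l"
  shows "psi (w \<circ> inv l) = psi w / psi l" "w \<circ> inv l \<in> GL"
proof -
  have fa: "field_aut (sof l)" using G_sof B_G l by blast
  have "psi (w \<circ> inv l) = psi w * sof l (psi (inv l))" using psi_comp[OF w B_inv[OF l]] s by simp
  moreover have "sof l (psi (inv l)) = 1 / psi l" using psi_inv[OF l] psi_nz[OF l]
    by (simp add: field_simps)
  ultimately show "psi (w \<circ> inv l) = psi w / psi l" by simp
  have "sof (w \<circ> inv l) = id" using G_sof_comp[OF B_G[OF w] G_inv[OF B_G[OF l]]] G_sof_inv(2)[OF B_G[OF l]] s by simp
  thus "w \<circ> inv l \<in> GL" using G_GL_iff G_comp B_G G_inv w l by blast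
qed

end

context setting begin

lemma SL_B: "m \<in> SL \<Longrightarrow> m (e i0) = e i0 \<Longrightarrow> m \<in> B"
  using B_I[of m] SL_G line0_I[of 1 i0] by auto

lemma lin_inv_eq: "g \<in> G \<Longrightarrow> g x = y \<Longrightarrow> inv g y = x"
  using G_bij by (metis bij_is_inj inv_f_f)

lemma inv_apply: "g \<in> G \<Longrightarrow> g (inv g y) = y"
  using G_bij by (simp add: bij_is_surj surj_f_inv_f)

lemma inv_apply2: "g \<in> G \<Longrightarrow> inv g (g y) = y"
  using G_bij by (simp add: bij_is_inj)

section \<open>The kernel of psi lies in M\<close>

lemma kernel:
  assumes gB: "g \<in> B" and gGL: "g \<in> GL" and p1: "psi g = 1"
  shows "g \<in> Mgrp i0 G"
proof -
  have gG: "g \<in> G" using B_G gB by blast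
  have slg: "semilinear id g" using GL_sl gGL by blast
  define a where "a = avl g"
  have a0: "a \<noteq> 0" using avl(2)[OF gB] a_def by simp
  have ga: "g (e i0) = a *s e i0" using avl(1)[OF gB] a_def by simp
  define r where "r = (\<chi> k. if k = i0 then 0 else - (g (e k) $ i0) / a)"
  have r0: "r $ i0 = 0" by (simp add: r_def)
  define w' where "w' = rv i0 r"
  have w'SL: "w' \<in> SL" using rv_SL[OF r0] w'_def by simp
  have w'G: "w' \<in> G" using SL_G w'SL by blast
  have w'x: "w' x = x + (\<Sum>k\<in>UNIV. r$k * x$k) *s e i0" for x by (simp add: w'_def rv_def)
  have w'fix: "w' (c *s e i0) = c *s e i0" for c
  proof -
    have "r$k * (c *s e i0)$k = 0" for k by (cases "k = i0") (simp_all add: std_basis_comp r0)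
    hence "(\<Sum>k\<in>UNIV. r$k * (c *s e i0)$k) = 0" by (simp only: sum.neutral_const)
    thus ?thesis by (simp only: w'x) simp
  qed
  have scG: "sc (1/a) \<in> GL" using sc_bij[of "1/a"] a0 by (simp add: GL_def sc_sl)
  define sl where "sl = sc (1/a) \<circ> g \<circ> w'"
  have slGL: "sl \<in> GL" unfolding sl_def using GL_comp scG gGL SL_GL[OF w'SL] by blast
  have sldet: "gdet sl = 1"
  proof -
    have "gdet sl = gdet (sc (1/a) \<circ> g) * gdet w'"
      unfolding sl_def by (rule gdet_comp_lin) (use GL_comp scG gGL GL_sl in blast)
    also have "\<dots> = (1/a) ^ CARD('n) * gdet g"
      using gdet_comp_lin[OF sc_sl, of "1/a" g] SL_gdet[OF w'SL] by (simp add: gdet_sc)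
    also have "\<dots> = psi g" by (simp add: psi_def a_def power_one_over)
    finally show ?thesis using p1 by simp
  qed
  have sle: "sl (e i0) = e i0"
    using w'fix[of 1] ga a0 by (simp add: sl_def sc_def)
  have gcomp: "g x $ i0 = (\<Sum>k\<in>UNIV. g (e k) $ i0 * x$k)" for x
    using sl_component[OF slg, of x i0] by (simp add: mat_of_def)
  have slhyp_sub: "sl ` hyp0 i0 \<subseteq> hyp0 i0"
  proof
    fix y assume "y \<in> sl ` hyp0 i0"
    then obtain x where x: "x $ i0 = 0" "y = sl x" by (auto simp: hyp0_def)
    define s where "s = (\<Sum>k\<in>UNIV. r$k * x$k)"
    have "s * a = (\<Sum>k\<in>UNIV. r$k * x$k * a)" by (simp add: s_def sum_distrib_right)
    also have "\<dots> = (\<Sum>k\<in>UNIV. - (g (e k) $ i0 * x$k))"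
    proof (rule sum.cong)
      fix k show "r$k * x$k * a = - (g (e k) $ i0 * x$k)"
        using a0 x(1) by (cases "k = i0") (simp_all add: r_def)
    qed simp
    finally have sa: "s * a = - (\<Sum>k\<in>UNIV. g (e k) $ i0 * x$k)" by (simp add: sum_negf)
    have "g (w' x) = g x + s *s (a *s e i0)"
      using w'x[of x] sl_add[OF slg] lin_scale[OF slg] ga s_def by simp
    hence "g (w' x) $ i0 = g x $ i0 + s * a" by (simp add: std_basis_comp)
    hence "g (w' x) $ i0 = 0" using sa gcomp[of x] by simp
    thus "y \<in> hyp0 i0" using x by (simp add: hyp0_def sl_def sc_def)
  qed
  have slhyp: "sl ` hyp0 i0 = hyp0 i0"
  proof (rule card_subset_eq)
    show "finite (hyp0 i0 :: ('a^'n) set)" by simp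
    show "card (sl ` hyp0 i0) = card (hyp0 i0 :: ('a^'n) set)"
      using card_image[OF inj_on_subset[OF bij_is_inj[OF GL_bij[OF slGL]] subset_UNIV]] by simp
  qed (rule slhyp_sub)
  have slSLn: "sl \<in> SLn i0"
    using slGL sldet sle slhyp by (simp add: SLn_def)
  define w where "w = g \<circ> inv w' \<circ> inv g"
  have wG: "w \<in> G" unfolding w_def using G_comp G_inv gG w'G by blast
  have invg: "inv g (c *s e i0) = (c / a) *s e i0" for c
  proof -
    have "g ((c / a) *s e i0) = c *s e i0" using lin_scale[OF slg] ga a0 by simp
    thus ?thesis using lin_inv_eq[OF gG] by blast
  qed
  have invw': "inv w' (c *s e i0) = c *s e i0" for c
    using lin_inv_eq[OF w'G] w'fix by blast
  have wline: "\<forall>x\<in>line0 i0. w x = x"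
  proof
    fix x :: "'a^'n" assume "x \<in> line0 i0"
    then obtain c where x: "x = c *s e i0" by (auto simp: line0_def)
    show "w x = x" using x invg invw' lin_scale[OF slg] ga a0 by (simp add: w_def)
  qed
  have wdiff: "\<forall>x. w x - x \<in> line0 i0"
  proof
    fix x :: "'a^'n"
    define y where "y = inv g x"
    define u where "u = inv w' y"
    have wu: "w' u = y" unfolding u_def using inv_apply[OF w'G] by simp
    have yu: "y = u + (\<Sum>k\<in>UNIV. r$k * u$k) *s e i0" using wu w'x[of u] by simp
    have "u - y = (- (\<Sum>k\<in>UNIV. r$k * u$k)) *s e i0" unfolding yu by (simp add: vec_eq_iff)
    hence "g u - g y = (- (\<Sum>k\<in>UNIV. r$k * u$k) * a) *s e i0"
      using sl_diff[OF slg] lin_scale[OF slg] ga by (metis vector_smult_assoc)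
    moreover have "w x - x = g u - g y"
      unfolding w_def u_def y_def using inv_apply[OF gG] by simp
    ultimately show "w x - x \<in> line0 i0" using line0_I by metis
  qed
  have wW: "w \<in> Wgrp i0 G" using wG wline wdiff by (simp add: Wgrp_def)
  have geq: "g = w \<circ> (sc a \<circ> sl)"
  proof
    fix x :: "'a^'n"
    have "sc a (sl x) = g (w' x)" using a0 by (simp add: sl_def sc_def)
    thus "g x = (w \<circ> (sc a \<circ> sl)) x" by (simp add: w_def inv_apply2[OF gG] inv_apply2[OF w'G])
  qed
  have "sc a \<circ> sl \<in> setprod Zsc (SLn i0)"
    using sc_Zsc[OF a0] slSLn unfolding setprod_def by blast
  hence "w \<circ> (sc a \<circ> sl) \<in> Mgrp i0 G" using wW unfolding Mgrp_def setprod_def by blast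
  thus ?thesis using geq by simp
qed

end

context setting begin

lemma tv_apply: "tv j c u x = x + (c * x$j) *s u" by (simp add: tv_def)

lemma tv_fix0: "j \<noteq> i0 \<Longrightarrow> tv j c u (e i0) = e i0"
  by (simp add: tv_apply std_basis_comp)

lemma step2:
  assumes v1: "v $ i1 \<noteq> 0"
  shows "\<exists>m\<in>SL. m (e i0) = e i0 \<and> m v = (v $ i1) *s e i1"
proof -
  define u where "u = v - (v $ i1) *s e i1"
  have u1: "u $ i1 = 0" by (simp add: u_def std_basis_comp)
  define m where "m = tv i1 (- 1 / v $ i1) u"
  have "m \<in> SL" using tv_SL[OF u1] m_def by simp
  moreover have "m (e i0) = e i0" using tv_fix0[OF i1] m_def by simp
  moreover have "m v = (v $ i1) *s e i1"
    using v1 by (simp add: m_def tv_apply u_def vec_eq_iff std_basis_comp)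
  ultimately show ?thesis by blast
qed

lemma trans_pt:
  assumes j: "j \<noteq> i0" "v $ j \<noteq> 0"
  shows "\<exists>m\<in>SL. m (e i0) = e i0 \<and> (\<exists>c. c \<noteq> 0 \<and> m v = c *s e i1)"
proof (cases "j = i1")
  case True
  thus ?thesis using step2[of v] j by blast
next
  case False
  define m1 where "m1 = tv j ((1 - v $ i1) / v $ j) (e i1)"
  have u1: "e i1 $ j = 0" using False by (simp add: std_basis_comp)
  have m1SL: "m1 \<in> SL" using tv_SL[OF u1] m1_def by simp
  have m1e: "m1 (e i0) = e i0" using tv_fix0[OF j(1)] m1_def by simp
  have v1: "m1 v $ i1 = 1" using j(2) by (simp add: m1_def tv_apply std_basis_comp)
  have "\<exists>m\<in>SL. m (e i0) = e i0 \<and> m (m1 v) = (m1 v $ i1) *s e i1"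
    by (rule step2) (simp add: v1)
  then obtain m2 where m2: "m2 \<in> SL" "m2 (e i0) = e i0" "m2 (m1 v) = (m1 v $ i1) *s e i1"
    by blast
  have "m2 \<circ> m1 \<in> SL" using SL_comp m2(1) m1SL by blast
  moreover have "(m2 \<circ> m1) (e i0) = e i0" using m1e m2(2) by simp
  moreover have "(m2 \<circ> m1) v = 1 *s e i1" using m2(3) v1 by simp
  moreover have "(1::'a) \<noteq> 0" by simp
  ultimately show ?thesis by blast
qed

definition t :: "('a,'n) vmap" where "t = tv i1 (- 1) (e i0) \<circ> tv i0 1 (e i1)"

lemma t_SL: "t \<in> SL"
  unfolding t_def using i1 by (intro SL_comp tv_SL) (simp_all add: std_basis_comp)

lemma t_G: "t \<in> G" using t_SL SL_G by blast

lemma t_GL: "t \<in> GL" using t_SL SL_GL by blast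

lemma t_e: "t (e i0) = e i1"
  using i1 by (simp add: t_def tv_apply vec_eq_iff std_basis_comp)

lemma tinv_G: "inv t \<in> G" using G_inv t_G by blast
lemma tinv_GL: "inv t \<in> GL" using GL_inv t_G t_GL by blast

lemma tinv_e: "inv t (c *s e i1) = c *s e i0"
proof -
  have "t (c *s e i0) = c *s e i1" using lin_scale[OF GL_sl[OF t_GL]] t_e by simp
  thus ?thesis using lin_inv_eq[OF t_G] by blast
qed

lemma t_notB: "t \<notin> B"
proof
  assume "t \<in> B"
  hence "e i1 \<in> line0 i0" using B_iff[OF t_G] t_e by simp
  hence "e i1 = (e i1 $ i0) *s e i0" using line0_iff by blast
  hence "(e i1 :: 'a^'n) $ i1 = 0" using i1 by (metis std_basis_comp vector_smult_rzero vector_scalar_mult_def vec_lambda_beta mult_zero_left)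
  thus False by (simp add: std_basis_comp)
qed

lemma bruhat:
  assumes h: "h \<in> G" "h \<notin> B"
  shows "\<exists>k1\<in>B. \<exists>k2\<in>B. h = k1 \<circ> t \<circ> k2"
proof -
  define v where "v = h (e i0)"
  have "v \<notin> line0 i0" using B_iff h v_def by blast
  then obtain j where j: "j \<noteq> i0" "v $ j \<noteq> 0"
  proof -
    assume r: "\<And>j. j \<noteq> i0 \<Longrightarrow> v $ j \<noteq> 0 \<Longrightarrow> thesis"
    { assume "\<forall>j. j \<noteq> i0 \<longrightarrow> v $ j = 0"
      hence "v = (v $ i0) *s e i0" by (auto simp: vec_eq_iff std_basis_comp)
      hence "v \<in> line0 i0" using line0_I by metis }
    thus thesis using r \<open>v \<notin> line0 i0\<close> by blast
  qed
  obtain m c where m: "m \<in> SL" "m (e i0) = e i0" "c \<noteq> 0" "m v = c *s e i1"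
    using trans_pt[OF j] by blast
  have mG: "m \<in> G" using SL_G m(1) by blast
  have mB: "m \<in> B" using SL_B m by blast
  define k2 where "k2 = inv t \<circ> m \<circ> h"
  have k2G: "k2 \<in> G" unfolding k2_def using G_comp tinv_G mG h(1) by blast
  have "k2 (e i0) = c *s e i0" using m(4) tinv_e by (simp add: k2_def v_def)
  hence k2B: "k2 \<in> B" using B_I[OF k2G] line0_I by metis
  have "h = inv m \<circ> t \<circ> k2"
    by (simp add: fun_eq_iff k2_def inv_apply[OF t_G] inv_apply2[OF mG])
  thus ?thesis using k2B B_inv[OF mB] by blast
qed

lemma gdet_conj_t: "g \<in> G \<Longrightarrow> gdet (inv t \<circ> g \<circ> t) = gdet g"
proof -
  assume g: "g \<in> G"
  have it: "gdet (inv t) = 1" using gdet_inv[OF t_G t_GL] SL_gdet[OF t_SL] by simp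
  have itg: "inv t \<circ> g \<in> G" using G_comp tinv_G g by blast
  have "gdet (inv t \<circ> g \<circ> t) = gdet (inv t \<circ> g) * sof (inv t \<circ> g) (gdet t)"
    using gdet_G_comp[OF itg] by simp
  also have "\<dots> = gdet (inv t \<circ> g)"
    using SL_gdet[OF t_SL] fa_1[OF G_sof(1)[OF itg]] by simp
  also have "\<dots> = gdet g" using gdet_comp_lin[OF GL_sl[OF tinv_GL]] it by simp
  finally show ?thesis .
qed

lemma psi_conj_t:
  assumes g: "g \<in> B" and h: "inv t \<circ> g \<circ> t \<in> B"
  shows "\<exists>c. c \<noteq> 0 \<and> psi g = c ^ CARD('n) * psi (inv t \<circ> g \<circ> t)"
proof -
  define a where "a = avl g"
  define b where "b = avl (inv t \<circ> g \<circ> t)"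
  have a0: "a \<noteq> 0" "b \<noteq> 0" using avl(2) g h a_def b_def by auto
  have "psi (inv t \<circ> g \<circ> t) = gdet g / b ^ CARD('n)"
    using gdet_conj_t[OF B_G[OF g]] by (simp add: psi_def b_def)
  moreover have "psi g = gdet g / a ^ CARD('n)" by (simp add: psi_def a_def)
  ultimately have "psi g = (b / a) ^ CARD('n) * psi (inv t \<circ> g \<circ> t)"
    using a0 by (simp add: power_divide)
  moreover have "b / a \<noteq> 0" using a0 by simp
  ultimately show ?thesis by blast
qed

lemma prod_two:
  assumes "i \<noteq> j"
  shows "(\<Prod>k\<in>(UNIV::'n set). if k = i then x else if k = j then y else (1::'a)) = x * y"
proof -
  have "(\<Prod>k\<in>(UNIV::'n set). if k = i then x else if k = j then y else (1::'a))
      = (\<Prod>k\<in>{i, j}. if k = i then x else if k = j then y else (1::'a))"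
    by (rule prod.mono_neutral_right) auto
  thus ?thesis using assms by simp
qed

lemma prod_one:
  "(\<Prod>k\<in>(UNIV::'n set). if k = i then x else (1::'a)) = x"
proof -
  have "(\<Prod>k\<in>(UNIV::'n set). if k = i then x else (1::'a)) = (\<Prod>k\<in>{i}. if k = i then x else (1::'a))"
    by (rule prod.mono_neutral_right) auto
  thus ?thesis by simp
qed

definition ydg :: "'a \<Rightarrow> ('a,'n) vmap" where
  "ydg b = dg (\<lambda>k. if k = i1 then b else if k = i2 then inverse b else 1)"

lemma ydg:
  assumes b: "b \<noteq> 0"
  shows "ydg b \<in> B" "ydg b \<in> GL" "psi (ydg b) = 1"
    "inv t \<circ> ydg b \<circ> t \<in> B" "psi (inv t \<circ> ydg b \<circ> t) = 1 / b ^ CARD('n)"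
proof -
  have GLy: "ydg b \<in> GL" unfolding ydg_def by (rule dg_GL) (use b in auto)
  have dety: "gdet (ydg b) = 1" unfolding ydg_def gdet_dg using prod_two[OF i2(2)[symmetric]] b
    by (simp add: i2(2)[symmetric])
  have ySL: "ydg b \<in> SL" using GLy dety by (simp add: SL_def)
  have ye0: "ydg b (e i0) = e i0"
    using i1 i2 by (simp add: ydg_def dg_def vec_eq_iff std_basis_comp)
  have ye1: "ydg b (e i1) = b *s e i1"
    using i2 by (simp add: ydg_def dg_def vec_eq_iff std_basis_comp)
  show yB: "ydg b \<in> B" using SL_B ySL ye0 by blast
  show "ydg b \<in> GL" by (rule GLy)
  show "psi (ydg b) = 1" using dety ye0 by (simp add: psi_def avl_def std_basis_comp)
  have hG: "inv t \<circ> ydg b \<circ> t \<in> G" using G_comp tinv_G t_G B_G[OF yB] by blast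
  have he: "(inv t \<circ> ydg b \<circ> t) (e i0) = b *s e i0" using t_e ye1 tinv_e by simp
  show "inv t \<circ> ydg b \<circ> t \<in> B" using B_I[OF hG] he line0_I by metis
  show "psi (inv t \<circ> ydg b \<circ> t) = 1 / b ^ CARD('n)"
    using gdet_conj_t[OF B_G[OF yB]] dety he by (simp add: psi_def avl_def std_basis_comp)
qed

definition xdg :: "'a \<Rightarrow> ('a,'n) vmap" where
  "xdg d = dg (\<lambda>k. if k = i1 then d else 1)"

lemma xdg:
  assumes d: "d \<in> dets (GLpart G)"
  shows "xdg d \<in> B" "xdg d \<in> GL" "psi (xdg d) = d"
proof -
  obtain g0 where g0: "g0 \<in> G" "g0 \<in> GL" "gdet g0 = d" using d by (auto simp: dets_def GLpart_def)
  have d0: "d \<noteq> 0" using gdet_nz g0 by blast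
  have GLx: "xdg d \<in> GL" unfolding xdg_def by (rule dg_GL) (use d0 in auto)
  have detx: "gdet (xdg d) = d" unfolding xdg_def gdet_dg using prod_one by simp
  have "xdg d \<circ> inv g0 \<in> SL"
  proof -
    have "xdg d \<circ> inv g0 \<in> GL" using GL_comp GLx GL_inv g0 by blast
    moreover have "gdet (xdg d \<circ> inv g0) = 1"
      using gdet_comp_lin[OF GL_sl[OF GLx]] detx gdet_inv[OF g0(1,2)] g0(3) by simp
    ultimately show ?thesis by (simp add: SL_def)
  qed
  hence "xdg d \<circ> inv g0 \<circ> g0 \<in> G" using SL_G G_comp g0(1) by blast
  hence xG: "xdg d \<in> G" using inv_comp_cancel[OF G_bij[OF g0(1)]] by (simp add: o_assoc[symmetric])
  have xe0: "xdg d (e i0) = e i0"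
    using i1 by (simp add: xdg_def dg_def vec_eq_iff std_basis_comp)
  show "xdg d \<in> B" using B_I[OF xG] xe0 line0_I[of 1 i0] by simp
  show "xdg d \<in> GL" by (rule GLx)
  show "psi (xdg d) = d" using detx xe0 by (simp add: psi_def avl_def std_basis_comp)
qed

end

lemma surj_comp_cancel: "surj h \<Longrightarrow> f \<circ> h = g \<circ> h \<Longrightarrow> f = g"
  by (metis fun.map_comp surj_iff o_id)

locale setL = setting G i0 for G :: "('a::{field,finite}, 'n::finite) vmap set" and i0 :: 'n +
  fixes L :: "('a, 'n) vmap set"
  assumes Lsub: "is_subgroup L" and MsubL: "Mgrp i0 G \<subseteq> L" and LB: "L \<subseteq> stab0 i0 G"
begin

lemma grpL: "grp L" using grp_subgroup[OF Lsub] .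
lemma L_B: "l \<in> L \<Longrightarrow> l \<in> B" using LB by blast
lemma L_G: "l \<in> L \<Longrightarrow> l \<in> G" using L_B B_G by blast
lemma L_comp: "g \<in> L \<Longrightarrow> h \<in> L \<Longrightarrow> g \<circ> h \<in> L" using grp_comp[OF grpL] .
lemma L_inv: "g \<in> L \<Longrightarrow> inv g \<in> L" using grp_inv[OF grpL] .
lemma L_id: "id \<in> L" using grp_id[OF grpL] .

lemma ker_L: "w \<in> B \<Longrightarrow> w \<in> GL \<Longrightarrow> psi w = 1 \<Longrightarrow> w \<in> L"
  using kernel MsubL by blast

definition KL :: "'a set" where "KL = psi ` GLpart L"

lemma Lchar:
  assumes w: "w \<in> B" and l: "l \<in> L" and s: "sof l = sof w" and r: "psi w / psi l \<in> KL"
  shows "w \<in> L"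
proof -
  obtain k where k: "k \<in> L" "k \<in> GL" "psi k = psi w / psi l" using r by (auto simp: KL_def GLpart_def)
  define v where "v = k \<circ> l"
  have vL: "v \<in> L" using L_comp k(1) l v_def by blast
  have psiv: "psi v = psi w" using psi_lin_comp[OF L_B[OF k(1)] L_B[OF l] k(2)] k(3) psi_nz[OF L_B[OF l]]
    by (simp add: v_def)
  have sofv: "sof v = sof w" using G_sof_comp[OF L_G[OF k(1)] L_G[OF l]] G_GL_iff[OF L_G[OF k(1)]] k(2) s
    by (simp add: v_def)
  have r1: "psi (w \<circ> inv v) = 1" "w \<circ> inv v \<in> GL"
    using psi_ratio[OF w L_B[OF vL] sofv[symmetric]] psiv psi_nz[OF w] by auto
  have "w \<circ> inv v \<in> L" using ker_L[OF B_comp[OF w B_inv[OF L_B[OF vL]]] r1(2) r1(1)] .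
  hence "w \<circ> inv v \<circ> v \<in> L" using L_comp vL by blast
  thus ?thesis using inv_comp_cancel[OF G_bij[OF L_G[OF vL]]] by (simp add: o_assoc[symmetric])
qed

lemma Kconj:
  assumes w: "w \<in> B" "w \<in> GL" "psi w = 1" and q: "q \<in> B"
  shows "inv q \<circ> w \<circ> q \<in> L"
proof -
  have iq: "inv q \<in> B" using B_inv q by blast
  have wq: "w \<circ> q \<in> B" using B_comp w(1) q by blast
  have "psi (w \<circ> q) = psi q" using psi_lin_comp[OF w(1) q w(2)] w(3) by simp
  hence "psi (inv q \<circ> (w \<circ> q)) = psi (inv q \<circ> q)" using psi_comp[OF iq wq] psi_comp[OF iq q] by simp
  hence p1: "psi (inv q \<circ> w \<circ> q) = 1" using inv_comp_cancel[OF G_bij[OF B_G[OF q]]] psi_id by (simp add: o_assoc)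
  have "sof (inv q \<circ> w \<circ> q) = sof (inv q) \<circ> sof w \<circ> sof q"
    using G_sof_comp B_G iq wq w(1) q by (simp add: o_assoc G_comp)
  hence "sof (inv q \<circ> w \<circ> q) = id" using G_GL_iff[OF B_G[OF w(1)]] w(2) G_sof_inv(3)[OF B_G[OF q]] by simp
  moreover have B1: "inv q \<circ> w \<circ> q \<in> B" using B_comp iq w(1) q by blast
  ultimately have "inv q \<circ> w \<circ> q \<in> GL" using G_GL_iff[OF B_G[OF B1]] by simp
  thus ?thesis using ker_L[OF B1] p1 by blast
qed

lemma Zsc_L: "z \<in> Zsc \<Longrightarrow> z \<in> L"
proof -
  assume z: "z \<in> Zsc"
  have idW: "id \<in> Wgrp i0 G" using G_id by (simp add: Wgrp_def line0_def)
  have idS: "id \<in> SLn i0" using sl_id gdet_id by (simp add: SLn_def GL_def)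
  have "z \<circ> id \<in> setprod Zsc (SLn i0)" using z idS unfolding setprod_def by blast
  hence "id \<circ> (z \<circ> id) \<in> Mgrp i0 G" using idW unfolding Mgrp_def setprod_def by blast
  thus "z \<in> L" using MsubL by auto
qed

section \<open>Galois parts\<close>

lemma eidx_card:
  assumes H: "grp H" "H \<subseteq> G"
  shows "eidx H = card (sof ` H)"
proof -
  have fin: "finite H" by simp
  have "card H = card (sof ` H) * card {k\<in>H. sof k = sof (id :: ('a,'n) vmap)}"
  proof (rule hom_count[of H sof "(\<circ>)", OF H(1) fin])
    fix x y assume "x \<in> H" "y \<in> H"
    thus "sof (x \<circ> y) = sof x \<circ> sof y" using G_sof_comp H(2) by blast
  next
    fix a b c :: "'a \<Rightarrow> 'a" assume "a \<in> sof ` H" "a \<circ> b = a \<circ> c"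
    moreover have "bij a" using calculation(1) H(2) G_sof(1) fa_bij by blast
    ultimately show "b = c" using comp_left_cancel by blast
  qed
  moreover have "{k\<in>H. sof k = sof (id :: ('a,'n) vmap)} = GLpart H" using G_GL_iff H(2) sof_id by (auto simp: GLpart_def)
  moreover have "card (GLpart H) > 0"
  proof -
    have "id \<in> GLpart H" using grp_id[OF H(1)] sl_id by (simp add: GLpart_def GL_def)
    thus ?thesis by (simp add: card_gt_0_iff) blast
  qed
  ultimately show ?thesis by (simp add: eidx_def)
qed

lemma sofG_B: "sof ` G = sof ` B"
proof
  show "sof ` G \<subseteq> sof ` B"
  proof
    fix s assume "s \<in> sof ` G"
    then obtain h where h: "h \<in> G" "s = sof h" by auto
    show "s \<in> sof ` B"
    proof (cases "h \<in> B")
      case True thus ?thesis using h by blast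
    next
      case False
      then obtain k1 k2 where k: "k1 \<in> B" "k2 \<in> B" "h = k1 \<circ> t \<circ> k2" using bruhat h(1) by blast
      have "sof h = sof k1 \<circ> sof t \<circ> sof k2"
        using k G_sof_comp B_G t_G G_comp by (metis)
      also have "\<dots> = sof (k1 \<circ> k2)" using G_GL_iff[OF t_G] t_GL G_sof_comp B_G k by simp
      finally show ?thesis using h B_comp k by blast
    qed
  qed
qed (use B_G in auto)

lemma eidx_iff: "eidx L = eidx G \<longleftrightarrow> sof ` L = sof ` B"
proof -
  have "eidx L = card (sof ` L)" using eidx_card grpL L_G by blast
  moreover have "eidx G = card (sof ` B)" using eidx_card[OF grpG] sofG_B by simp
  moreover have "sof ` L \<subseteq> sof ` B" using LB by auto
  ultimately show ?thesis using card_subset_eq[of "sof ` B" "sof ` L"] by auto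
qed

section \<open>Determinant sets\<close>

lemma KB: "psi ` GLpart B = dets (GLpart G)"
proof
  show "psi ` GLpart B \<subseteq> dets (GLpart G)"
  proof
    fix y assume "y \<in> psi ` GLpart B"
    then obtain g where g: "g \<in> B" "g \<in> GL" "y = psi g" by (auto simp: GLpart_def)
    define a where "a = avl g"
    have a0: "a \<noteq> 0" using avl(2)[OF g(1)] a_def by simp
    have scG: "sc (1/a) \<in> G" "sc (1/a) \<in> GL"
      using Zsc_G sc_Zsc[of "1/a"] a0 sc_bij[of "1/a"] by (auto simp: GL_def sc_sl)
    have "gdet (g \<circ> sc (1/a)) = y"
      using gdet_comp_lin[OF GL_sl[OF g(2)]] g(3) by (simp add: gdet_sc psi_def a_def power_one_over)
    moreover have "g \<circ> sc (1/a) \<in> GLpart G"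
      using G_comp B_G g scG GL_comp by (simp add: GLpart_def)
    ultimately show "y \<in> dets (GLpart G)" by (auto simp: dets_def)
  qed
next
  show "dets (GLpart G) \<subseteq> psi ` GLpart B"
  proof
    fix d assume d: "d \<in> dets (GLpart G)"
    have "xdg d \<in> GLpart B" using xdg[OF d] by (simp add: GLpart_def)
    thus "d \<in> psi ` GLpart B" using xdg(3)[OF d] by (metis image_eqI)
  qed
qed

lemma detsL: "dets (GLpart L) = {c ^ CARD('n) * k | c k. c \<noteq> 0 \<and> k \<in> KL}"
proof
  show "dets (GLpart L) \<subseteq> {c ^ CARD('n) * k | c k. c \<noteq> 0 \<and> k \<in> KL}"
  proof
    fix y assume "y \<in> dets (GLpart L)"
    then obtain l where l: "l \<in> L" "l \<in> GL" "y = gdet l" by (auto simp: dets_def GLpart_def)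
    have a0: "avl l \<noteq> 0" using avl(2)[OF L_B[OF l(1)]] by simp
    have "y = avl l ^ CARD('n) * psi l" using a0 l(3) by (simp add: psi_def)
    moreover have "psi l \<in> KL" using l by (auto simp: KL_def GLpart_def)
    ultimately show "y \<in> {c ^ CARD('n) * k | c k. c \<noteq> 0 \<and> k \<in> KL}" using a0 by blast
  qed
next
  show "{c ^ CARD('n) * k | c k. c \<noteq> 0 \<and> k \<in> KL} \<subseteq> dets (GLpart L)"
  proof
    fix y assume "y \<in> {c ^ CARD('n) * k | c k. c \<noteq> 0 \<and> k \<in> KL}"
    then obtain c l where cl: "c \<noteq> 0" "l \<in> L" "l \<in> GL" "y = c ^ CARD('n) * psi l"
      by (auto simp: KL_def GLpart_def)
    define a where "a = avl l"
    have a0: "a \<noteq> 0" using avl(2)[OF L_B[OF cl(2)]] a_def by simp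
    have scL: "sc (c/a) \<in> L" "sc (c/a) \<in> GL"
      using Zsc_L sc_Zsc[of "c/a"] a0 cl(1) sc_bij[of "c/a"] by (auto simp: GL_def sc_sl)
    have "gdet (l \<circ> sc (c/a)) = y"
      using gdet_comp_lin[OF GL_sl[OF cl(3)]] cl(4) a0 by (simp add: gdet_sc psi_def a_def power_divide)
    moreover have "l \<circ> sc (c/a) \<in> GLpart L"
      using L_comp cl scL GL_comp by (simp add: GLpart_def)
    ultimately show "y \<in> dets (GLpart L)" by (auto simp: dets_def)
  qed
qed

lemma detsL_sub: "dets (GLpart L) \<subseteq> dets (GLpart G)"
  using L_G by (auto simp: dets_def GLpart_def)

end

context setting begin

lemma notline_coord:
  assumes "(v::'a^'n) \<notin> line0 i0"
  shows "\<exists>j. j \<noteq> i0 \<and> v $ j \<noteq> 0"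
proof (rule ccontr)
  assume "\<not> (\<exists>j. j \<noteq> i0 \<and> v $ j \<noteq> 0)"
  hence "v = (v $ i0) *s e i0" by (auto simp: vec_eq_iff std_basis_comp)
  thus False using assms line0_I by metis
qed

lemma e1_notline: "e i1 \<notin> line0 i0"
  using t_notB B_iff[OF t_G] t_e by simp

end

context setL begin

lemma lcL: "a \<in> G \<Longrightarrow> b \<in> G \<Longrightarrow> lcoset a L = lcoset b L \<longleftrightarrow> inv a \<circ> b \<in> L"
  using lcoset_eq[OF grpL] G_bij by blast

lemma lcB: "a \<in> G \<Longrightarrow> b \<in> G \<Longrightarrow> lcoset a B = lcoset b B \<longleftrightarrow> inv a \<circ> b \<in> B"
  using lcoset_eq[OF grpB] G_bij by blast

lemma tbt_inst:
  assumes T: "two_by_block_transitive G L B" and x: "x \<in> B"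
  shows "\<exists>g\<in>G. inv x \<circ> g \<in> L \<and> inv t \<circ> g \<circ> t \<in> L"
proof -
  have xG: "x \<in> G" using B_G x by blast
  have n1: "lcoset id B \<noteq> lcoset t B" using lcB[OF G_id t_G] t_notB by simp
  have n2: "lcoset x B \<noteq> lcoset t B"
  proof
    assume "lcoset x B = lcoset t B"
    hence "inv x \<circ> t \<in> B" using lcB[OF xG t_G] by simp
    hence "x \<circ> (inv x \<circ> t) \<in> B" using B_comp x by blast
    thus False using t_notB comp_inv_cancel2[OF G_bij[OF xG], of t] by metis
  qed
  obtain g where g: "g \<in> G" "lcoset (g \<circ> id) L = lcoset x L" "lcoset (g \<circ> t) L = lcoset t L"
    using T G_id t_G xG n1 n2 unfolding two_by_block_transitive_def by blast
  have "inv x \<circ> g \<in> L" using lcL[OF xG g(1)] g(2) by simp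
  moreover have "inv t \<circ> (g \<circ> t) \<in> L" using lcL[OF t_G G_comp[OF g(1) t_G]] g(3) by simp
  ultimately show ?thesis using g(1) by (auto simp: o_assoc)
qed

lemma sof_conj_t: "g \<in> G \<Longrightarrow> sof (inv t \<circ> g \<circ> t) = sof g"
proof -
  assume g: "g \<in> G"
  have "sof (inv t \<circ> g \<circ> t) = sof (inv t) \<circ> sof g \<circ> sof t"
    using G_sof_comp tinv_G t_G g G_comp by metis
  thus ?thesis using G_GL_iff t_G t_GL tinv_G tinv_GL by simp
qed

lemma i_gal:
  assumes T: "two_by_block_transitive G L B"
  shows "sof ` B \<subseteq> sof ` L"
proof
  fix s assume "s \<in> sof ` B"
  then obtain x where x: "x \<in> B" "s = sof x" by auto
  have xG: "x \<in> G" using B_G x by blast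
  obtain g where g: "g \<in> G" "inv x \<circ> g \<in> L" "inv t \<circ> g \<circ> t \<in> L" using tbt_inst[OF T x(1)] by blast
  define l1 where "l1 = inv x \<circ> g"
  define l2 where "l2 = inv t \<circ> g \<circ> t"
  have l1: "l1 \<in> L" "l1 \<in> G" using g(2) L_G l1_def by auto
  have l2: "l2 \<in> L" "l2 \<in> G" using g(3) L_G l2_def by auto
  define l where "l = l2 \<circ> inv l1"
  have lL: "l \<in> L" using L_comp L_inv l1 l2 l_def by blast
  have s2: "sof l2 = sof g" using sof_conj_t g(1) l2_def by simp
  have "x \<circ> l1 = g" using comp_inv_cancel2[OF G_bij[OF xG]] l1_def by simp
  hence e1: "sof x \<circ> sof l1 = sof g" using G_sof_comp[OF xG l1(2)] by simp
  have "l \<circ> l1 = l2" using inv_comp_cancel[OF G_bij[OF l1(2)]] l_def by (simp add: o_assoc[symmetric])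
  moreover have "sof (l \<circ> l1) = sof l \<circ> sof l1" using G_sof_comp[OF L_G[OF lL] l1(2)] .
  ultimately have e2: "sof l \<circ> sof l1 = sof g" using s2 by simp
  have su: "surj (sof l1)" using fa_bij[OF G_sof(1)[OF l1(2)]] bij_is_surj by blast
  have "sof l \<circ> sof l1 = sof x \<circ> sof l1" using e1 e2 by simp
  hence "sof l = sof x" using surj_comp_cancel[OF su] by blast
  hence "s = sof l" using x(2) by simp
  thus "s \<in> sof ` L" using lL by (rule image_eqI)
qed

lemma i_det:
  assumes T: "two_by_block_transitive G L B"
  shows "dets (GLpart G) \<subseteq> dets (GLpart L)"
proof
  fix d assume d: "d \<in> dets (GLpart G)"
  define x where "x = xdg d"
  have x: "x \<in> B" "x \<in> GL" "psi x = d" using xdg[OF d] x_def by auto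
  have xG: "x \<in> G" using B_G x by blast
  obtain g where g: "g \<in> G" "inv x \<circ> g \<in> L" "inv t \<circ> g \<circ> t \<in> L" using tbt_inst[OF T x(1)] by blast
  define l1 where "l1 = inv x \<circ> g"
  define l2 where "l2 = inv t \<circ> g \<circ> t"
  have l1: "l1 \<in> L" "l1 \<in> B" "l1 \<in> G" using g(2) L_G L_B l1_def by auto
  have l2: "l2 \<in> L" "l2 \<in> B" "l2 \<in> G" using g(3) L_G L_B l2_def by auto
  have xl1: "x \<circ> l1 = g" using comp_inv_cancel2[OF G_bij[OF xG]] l1_def by simp
  have gB: "g \<in> B" using B_comp[OF x(1) l1(2)] xl1 by simp
  have pg: "psi g = d * psi l1" using psi_lin_comp[OF x(1) l1(2) x(2)] xl1 x(3) by simp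
  obtain c where c: "c \<noteq> 0" "psi g = c ^ CARD('n) * psi l2" using psi_conj_t[OF gB] l2 l2_def by blast
  have s2: "sof l2 = sof g" using sof_conj_t g(1) l2_def by simp
  have s1: "sof l1 = sof g" using G_sof_comp[OF xG l1(3)] xl1 G_GL_iff[OF xG] x(2) by simp
  have r: "psi (l2 \<circ> inv l1) = psi l2 / psi l1" "l2 \<circ> inv l1 \<in> GL"
    using psi_ratio[OF l2(2) l1(2)] s1 s2 by auto
  have l3: "l2 \<circ> inv l1 \<in> L" using L_comp L_inv l1 l2 by blast
  have "d * psi l1 = (c ^ CARD('n) * psi (l2 \<circ> inv l1)) * psi l1"
    using pg c(2) r(1) psi_nz[OF l1(2)] by simp
  hence "d = c ^ CARD('n) * psi (l2 \<circ> inv l1)" using psi_nz[OF l1(2)] by simp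
  moreover have "psi (l2 \<circ> inv l1) \<in> KL" using l3 r(2) by (auto simp: KL_def GLpart_def)
  ultimately show "d \<in> dets (GLpart L)" using detsL c(1) by blast
qed

end

context setL begin

lemma claimC:
  assumes gal: "sof ` L = sof ` B" and det: "dets (GLpart G) \<subseteq> dets (GLpart L)"
    and p: "p \<in> B" and q: "q \<in> B" and r: "r \<in> B" and s: "s \<in> B"
  shows "\<exists>z\<in>B. p \<circ> z \<circ> q \<in> L \<and> r \<circ> (inv t \<circ> z \<circ> t) \<circ> s \<in> L"
proof -
  have pG: "p \<in> G" and qG: "q \<in> G" using B_G p q by auto
  define z0 where "z0 = inv p \<circ> inv q"
  have z0B: "z0 \<in> B" using B_comp B_inv p q z0_def by blast
  have z0G: "z0 \<in> G" using B_G z0B by blast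
  define v where "v = inv z0 (e i1)"
  have z0v: "z0 v = e i1" using inv_apply[OF z0G] v_def by simp
  have "v \<notin> line0 i0"
  proof
    assume "v \<in> line0 i0"
    hence "z0 v \<in> z0 ` line0 i0" by blast
    hence "e i1 \<in> line0 i0" using z0v z0B by (simp add: stab0_def)
    thus False using e1_notline by blast
  qed
  then obtain j where j: "j \<noteq> i0" "v $ j \<noteq> 0" using notline_coord by blast
  obtain m0 c where m0: "m0 \<in> SL" "m0 (e i0) = e i0" "c \<noteq> 0" "m0 v = c *s e i1"
    using trans_pt[OF j] by blast
  have m0G: "m0 \<in> G" using SL_G m0(1) by blast
  have m0B: "m0 \<in> B" using SL_B m0(1,2) by blast
  have m0GL: "m0 \<in> GL" using SL_GL m0(1) by blast
  have psim0: "psi m0 = 1" using SL_gdet[OF m0(1)] m0(2) by (simp add: psi_def avl_def std_basis_comp)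
  have im0B: "inv m0 \<in> B" using B_inv m0B by blast
  have im0GL: "inv m0 \<in> GL" using GL_inv m0G m0GL by blast
  have psiim0: "psi (inv m0) = 1"
    using psi_inv[OF m0B] psim0 G_GL_iff[OF m0G] m0GL by simp
  define z1 where "z1 = z0 \<circ> inv m0"
  have z1B: "z1 \<in> B" using B_comp z0B im0B z1_def by blast
  have z1G: "z1 \<in> G" using B_G z1B by blast
  have "m0 ((1 / c) *s v) = e i1" using lin_scale[OF GL_sl[OF m0GL]] m0(3,4) by simp
  hence "inv m0 (e i1) = (1 / c) *s v" using lin_inv_eq[OF m0G] by blast
  hence z1e1: "z1 (e i1) = sof z0 (1 / c) *s e i1"
    using sl_scale[OF G_sof(2)[OF z0G]] z0v by (simp add: z1_def)
  define z1' where "z1' = inv t \<circ> z1 \<circ> t"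
  have z1'G: "z1' \<in> G" using G_comp tinv_G z1G t_G z1'_def by blast
  have "z1' (e i0) = sof z0 (1 / c) *s e i0" using t_e z1e1 tinv_e by (simp add: z1'_def)
  hence z1'B: "z1' \<in> B" using B_I[OF z1'G] line0_I by metis
  define W where "W = r \<circ> z1' \<circ> s"
  have WB: "W \<in> B" using B_comp r z1'B s W_def by blast
  obtain l where l: "l \<in> L" "sof l = sof W" using gal WB by (metis image_iff)
  have lB: "l \<in> B" using L_B l(1) by blast
  have rat: "psi (W \<circ> inv l) = psi W / psi l" "W \<circ> inv l \<in> GL" using psi_ratio[OF WB lB] l(2) by auto
  have "W \<circ> inv l \<in> GLpart B" using B_comp[OF WB B_inv[OF lB]] rat(2) by (simp add: GLpart_def)
  hence "psi W / psi l \<in> dets (GLpart G)" using KB rat(1) by (metis image_eqI)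
  hence "psi W / psi l \<in> dets (GLpart L)" using det by blast
  then obtain c0 k0 where ck: "c0 \<noteq> 0" "k0 \<in> KL" "psi W / psi l = c0 ^ CARD('n) * k0"
    using detsL by blast
  define rz where "rz = r \<circ> z1'"
  have rzB: "rz \<in> B" using B_comp r z1'B rz_def by blast
  have rzG: "rz \<in> G" using B_G rzB by blast
  define \<sigma> where "\<sigma> = sof rz"
  have fa: "field_aut \<sigma>" using G_sof(1)[OF rzG] \<sigma>_def by simp
  define b where "b = inv \<sigma> c0"
  have sb: "\<sigma> b = c0" using fa_bij[OF fa] b_def by (simp add: bij_is_surj surj_f_inv_f)
  have b0: "b \<noteq> 0" using sb ck(1) fa_0[OF fa] by auto
  define y where "y = ydg b"
  have y: "y \<in> B" "y \<in> GL" "psi y = 1" "inv t \<circ> y \<circ> t \<in> B" "psi (inv t \<circ> y \<circ> t) = 1 / b ^ CARD('n)"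
    using ydg[OF b0] y_def by auto
  have yG: "y \<in> G" using B_G y(1) by blast
  define y' where "y' = inv t \<circ> y \<circ> t"
  have y'B: "y' \<in> B" using y(4) y'_def by simp
  have y'G: "y' \<in> G" using B_G y'B by blast
  have y'GL: "y' \<in> GL" using G_GL_iff[OF y'G] sof_conj_t[OF yG] G_GL_iff[OF yG] y(2) y'_def by simp
  define z where "z = z1 \<circ> y"
  have zB: "z \<in> B" using B_comp z1B y(1) z_def by blast
  have part1: "p \<circ> z \<circ> q \<in> L"
  proof -
    have "p \<circ> z \<circ> q = (inv q \<circ> inv m0 \<circ> q) \<circ> (inv q \<circ> y \<circ> q)"
      by (simp add: fun_eq_iff z_def z1_def z0_def inv_apply[OF pG] inv_apply[OF qG])
    moreover have "inv q \<circ> inv m0 \<circ> q \<in> L" using Kconj[OF im0B im0GL psiim0 q] .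
    moreover have "inv q \<circ> y \<circ> q \<in> L" using Kconj[OF y(1) y(2) y(3) q] .
    ultimately show ?thesis using L_comp by simp
  qed
  have conj: "inv t \<circ> z \<circ> t = z1' \<circ> y'"
    by (simp add: fun_eq_iff z_def z1'_def y'_def inv_apply[OF t_G])
  have part2: "r \<circ> (inv t \<circ> z \<circ> t) \<circ> s \<in> L"
  proof -
    have eq: "r \<circ> (inv t \<circ> z \<circ> t) \<circ> s = rz \<circ> (y' \<circ> s)" using conj by (simp add: rz_def o_assoc)
    have y's: "y' \<circ> s \<in> B" using B_comp y'B s by blast
    have sofy': "sof y' = id" using G_GL_iff[OF y'G] y'GL by simp
    have "sof (rz \<circ> (y' \<circ> s)) = sof rz \<circ> (sof y' \<circ> sof s)"
      using G_sof_comp rzG y'G B_G s G_comp by metis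
    also have "\<dots> = sof W" using sofy' G_sof_comp[OF rzG B_G[OF s]] by (simp add: W_def rz_def)
    finally have sofeq: "sof (rz \<circ> (y' \<circ> s)) = sof l" using l(2) by simp
    have "psi (rz \<circ> (y' \<circ> s)) = psi rz * \<sigma> (psi y' * psi s)"
      using psi_comp[OF rzB y's] psi_lin_comp[OF y'B s y'GL] \<sigma>_def by simp
    also have "\<dots> = psi rz * \<sigma> (psi s) / c0 ^ CARD('n)"
      using y(5) sb by (simp add: y'_def fa_mult[OF fa] fa_divide[OF fa] fa_power[OF fa] fa_1[OF fa])
    also have "\<dots> = psi W / c0 ^ CARD('n)"
      using psi_comp[OF rzB s] \<sigma>_def by (simp add: W_def rz_def)
    finally have "psi (rz \<circ> (y' \<circ> s)) / psi l = k0"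
      using ck(1,3) psi_nz[OF lB] by (simp add: field_simps)
    hence "psi (rz \<circ> (y' \<circ> s)) / psi l \<in> KL" using ck(2) by simp
    moreover have "rz \<circ> (y' \<circ> s) \<in> B" using B_comp rzB y's by blast
    ultimately have "rz \<circ> (y' \<circ> s) \<in> L" using Lchar l(1) sofeq by metis
    thus ?thesis using eq by simp
  qed
  show ?thesis using zB part1 part2 by blast
qed

lemma ii_imp_i:
  assumes gal: "sof ` L = sof ` B" and det: "dets (GLpart G) \<subseteq> dets (GLpart L)"
  shows "two_by_block_transitive G L B"
  unfolding two_by_block_transitive_def
proof (intro ballI impI)
  fix a b c d assume G4: "a \<in> G" "b \<in> G" "c \<in> G" "d \<in> G"
    and ne: "lcoset a B \<noteq> lcoset b B \<and> lcoset c B \<noteq> lcoset d B"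
  have ab: "inv a \<circ> b \<in> G" "inv a \<circ> b \<notin> B" using lcB G4 ne G_comp G_inv by auto
  have cd: "inv c \<circ> d \<in> G" "inv c \<circ> d \<notin> B" using lcB G4 ne G_comp G_inv by auto
  obtain k1 k2 where k12: "k1 \<in> B" "k2 \<in> B" "inv a \<circ> b = k1 \<circ> t \<circ> k2" using bruhat[OF ab] by blast
  obtain k3 k4 where k34: "k3 \<in> B" "k4 \<in> B" "inv c \<circ> d = k3 \<circ> t \<circ> k4" using bruhat[OF cd] by blast
  have kG: "k1 \<in> G" "k2 \<in> G" "k3 \<in> G" "k4 \<in> G" using B_G k12 k34 by auto
  obtain z where z: "z \<in> B" "k3 \<circ> z \<circ> inv k1 \<in> L" "inv k4 \<circ> (inv t \<circ> z \<circ> t) \<circ> k2 \<in> L"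
    using claimC[OF gal det k34(1) B_inv[OF k12(1)] B_inv[OF k34(2)] k12(2)] by blast
  have zG: "z \<in> G" using B_G z(1) by blast
  define h where "h = k3 \<circ> z \<circ> inv k1"
  define g where "g = c \<circ> h \<circ> inv a"
  have gG: "g \<in> G" unfolding g_def h_def using G_comp G_inv G4 kG zG by metis
  have bx: "b x = a (k1 (t (k2 x)))" for x
  proof -
    have "b x = a (inv a (b x))" using inv_apply[OF G4(1)] by simp
    also have "inv a (b x) = k1 (t (k2 x))" using fun_cong[OF k12(3), of x] by simp
    finally show ?thesis .
  qed
  have dx: "d x = c (k3 (t (k4 x)))" for x
  proof -
    have "d x = c (inv c (d x))" using inv_apply[OF G4(3)] by simp
    also have "inv c (d x) = k3 (t (k4 x))" using fun_cong[OF k34(3), of x] by simp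
    finally show ?thesis .
  qed
  have "inv c \<circ> (g \<circ> a) = h"
    by (simp add: fun_eq_iff g_def inv_apply2[OF G4(3)] inv_apply2[OF G4(1)])
  hence c1: "lcoset (g \<circ> a) L = lcoset c L" using lcL[OF G4(3) G_comp[OF gG G4(1)]] z(2) h_def by simp
  define X where "X = inv k4 \<circ> (inv t \<circ> z \<circ> t) \<circ> k2"
  have "g \<circ> b = d \<circ> X"
    by (simp add: fun_eq_iff g_def h_def X_def bx dx inv_apply2[OF G4(1)] inv_apply2[OF kG(1)]
        inv_apply[OF kG(4)] inv_apply[OF t_G])
  hence "inv d \<circ> (g \<circ> b) = X" by (simp add: fun_eq_iff inv_apply2[OF G4(4)])
  hence c2: "lcoset (g \<circ> b) L = lcoset d L" using lcL[OF G4(4) G_comp[OF gG G4(2)]] z(3) X_def by simp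
  show "\<exists>g\<in>G. lcoset (g \<circ> a) L = lcoset c L \<and> lcoset (g \<circ> b) L = lcoset d L"
    using gG c1 c2 by blast
qed

end

context setL begin

lemma card_split:
  assumes H: "grp H" "H \<subseteq> G"
  shows "card H = card (sof ` H) * card (GLpart H)"
proof -
  have fin: "finite H" by simp
  have "card H = card (sof ` H) * card {k\<in>H. sof k = sof (id :: ('a,'n) vmap)}"
  proof (rule hom_count[of H sof "(\<circ>)", OF H(1) fin])
    fix x y assume "x \<in> H" "y \<in> H"
    thus "sof (x \<circ> y) = sof x \<circ> sof y" using G_sof_comp H(2) by blast
  next
    fix a b c :: "'a \<Rightarrow> 'a" assume "a \<in> sof ` H" "a \<circ> b = a \<circ> c"
    moreover have "bij a" using calculation(1) H(2) G_sof(1) fa_bij by blast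
    ultimately show "b = c" using comp_left_cancel by blast
  qed
  moreover have "{k\<in>H. sof k = sof (id :: ('a,'n) vmap)} = GLpart H" using G_GL_iff H(2) sof_id by (auto simp: GLpart_def)
  ultimately show ?thesis by simp
qed

lemma grp_GLpart: "grp H \<Longrightarrow> H \<subseteq> G \<Longrightarrow> grp (GLpart H)"
  unfolding grp_def GLpart_def using GL_comp GL_inv sl_id by (auto simp: GL_def)

lemma card_GLpart:
  assumes H: "grp H" "H \<subseteq> B"
  shows "card (GLpart H) = card (psi ` GLpart H) * card {k\<in>GLpart H. psi k = 1}"
proof -
  have HG: "H \<subseteq> G" using H(2) B_G by blast
  have "card (GLpart H) = card (psi ` GLpart H) * card {k\<in>GLpart H. psi k = psi (id :: ('a,'n) vmap)}"
  proof (rule hom_count[of "GLpart H" psi "(*)", OF grp_GLpart[OF H(1) HG]])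
    show "finite (GLpart H)" by simp
  next
    fix x y assume "x \<in> GLpart H" "y \<in> GLpart H"
    thus "psi (x \<circ> y) = psi x * psi y" using psi_lin_comp H(2) by (auto simp: GLpart_def)
  next
    fix a b c :: 'a assume "a \<in> psi ` GLpart H" "a * b = a * c"
    moreover have "a \<noteq> 0" using calculation(1) psi_nz H(2) by (auto simp: GLpart_def)
    ultimately show "b = c" by simp
  qed
  thus ?thesis using psi_id by simp
qed

lemma index_eq:
  assumes gal: "sof ` L = sof ` B"
  shows "card B div card L = card (dets (GLpart G)) div card KL"
proof -
  have BG: "B \<subseteq> G" using B_G by blast
  have LG: "L \<subseteq> G" using L_G by blast
  have kers: "{k\<in>GLpart B. psi k = 1} = {k\<in>GLpart L. psi k = 1}"
    using ker_L LB by (auto simp: GLpart_def)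
  define g where "g = card (sof ` B)"
  define k where "k = card {k\<in>GLpart L. psi k = 1}"
  have cB: "card B = g * card (dets (GLpart G)) * k"
    using card_split[OF grpB BG] card_GLpart[OF grpB order_refl] KB kers g_def k_def by simp
  have cL: "card L = g * card KL * k"
    using card_split[OF grpL LG] card_GLpart[OF grpL LB] gal g_def k_def KL_def by simp
  have g0: "g > 0" using B_id g_def by (auto simp: card_gt_0_iff)
  have "id \<in> {k\<in>GLpart L. psi k = 1}" using L_id psi_id sl_id by (simp add: GLpart_def GL_def)
  hence k0: "k > 0" using k_def by (auto simp: card_gt_0_iff)
  show ?thesis using cB cL g0 k0 by (simp add: mult.commute mult.left_commute)
qed

lemma msub_D: "msub (dets (GLpart G))"
  unfolding msub_def dets_def GLpart_def
proof (intro conjI ballI)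
  show "1 \<in> gdet ` (G \<inter> GL)" using G_id gdet_id sl_id by (auto simp: GL_def intro!: image_eqI[of 1 gdet id])
  show "0 \<notin> gdet ` (G \<inter> GL)" using gdet_nz by force
  fix x y assume "x \<in> gdet ` (G \<inter> GL)" "y \<in> gdet ` (G \<inter> GL)"
  then obtain g h where "g \<in> G \<inter> GL" "h \<in> G \<inter> GL" "x = gdet g" "y = gdet h" by auto
  moreover hence "gdet (g \<circ> h) = x * y" using gdet_comp_lin GL_sl by auto
  moreover have "g \<circ> h \<in> G \<inter> GL" using calculation G_comp GL_comp by auto
  ultimately show "x * y \<in> gdet ` (G \<inter> GL)" by (metis image_eqI)
qed

lemma msub_KL: "msub KL"
  unfolding msub_def KL_def GLpart_def
proof (intro conjI ballI)
  show "1 \<in> psi ` (L \<inter> GL)" using L_id psi_id sl_id by (auto simp: GL_def intro!: image_eqI[of 1 psi id])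
  show "0 \<notin> psi ` (L \<inter> GL)" using psi_nz L_B by force
  fix x y assume "x \<in> psi ` (L \<inter> GL)" "y \<in> psi ` (L \<inter> GL)"
  then obtain g h where "g \<in> L \<inter> GL" "h \<in> L \<inter> GL" "x = psi g" "y = psi h" by auto
  moreover hence "psi (g \<circ> h) = x * y" using psi_lin_comp L_B by auto
  moreover have "g \<circ> h \<in> L \<inter> GL" using calculation L_comp GL_comp by auto
  ultimately show "x * y \<in> psi ` (L \<inter> GL)" by (metis image_eqI)
qed

lemma KL_D: "KL \<subseteq> dets (GLpart G)"
  using KB LB unfolding KL_def GLpart_def by auto

lemma pow_in_D: "c \<noteq> 0 \<Longrightarrow> c ^ CARD('n) \<in> dets (GLpart G)"
proof -
  assume c: "c \<noteq> 0"
  have "sc c \<in> G" "sc c \<in> GL" using Zsc_G sc_Zsc[OF c] sc_bij[OF c] by (auto simp: GL_def sc_sl)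
  moreover have "gdet (sc c :: ('a,'n) vmap) = c ^ CARD('n)" by (rule gdet_sc)
  ultimately show ?thesis unfolding dets_def GLpart_def by (metis IntI image_eqI)
qed

lemma ii_iff_iii:
  fixes mu :: 'a
  assumes gal: "sof ` L = sof ` B" and mu: "\<forall>x::'a. x \<noteq> 0 \<longrightarrow> (\<exists>k. x = mu ^ k)"
  shows "dets (GLpart L) = dets (GLpart G) \<longleftrightarrow>
         coprime (card B div card L) (card (Pdets mu (GLpart G)))"
proof -
  define D where "D = dets (GLpart G)"
  define P where "P = {mu ^ (k * CARD('n)) | k. True}"
  have Pd: "Pdets mu (GLpart G) = (\<lambda>\<delta>. (\<lambda>y. \<delta> * y) ` P) ` D"
    unfolding Pdets_def Pdet_def P_def D_def dets_def by (simp add: image_image)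
  have iiD: "dets (GLpart L) = D \<longleftrightarrow> D \<subseteq> dets (GLpart L)" using detsL_sub D_def by blast
  show ?thesis
  proof (cases "mu = 0")
    case True
    have one: "\<And>x::'a. x \<noteq> 0 \<Longrightarrow> x = 1"
    proof -
      fix x :: 'a assume "x \<noteq> 0"
      then obtain k where "x = mu ^ k" using mu by blast
      thus "x = 1" using True \<open>x \<noteq> 0\<close> by (cases k) auto
    qed
    have D1: "D = {1}"
    proof
      show "{1} \<subseteq> D" using msub_D unfolding D_def msub_def by simp
      show "D \<subseteq> {1}"
      proof
        fix x assume "x \<in> D"
        hence "x \<noteq> 0" using msub_D unfolding D_def msub_def by metis
        thus "x \<in> {1}" using one by simp
      qed
    qed
    have "1 \<in> dets (GLpart L)" using msub_KL unfolding msub_def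
      using detsL by (auto intro!: exI[of _ 1])
    hence "D \<subseteq> dets (GLpart L)" using D1 by simp
    moreover have "card (Pdets mu (GLpart G)) = 1" using Pd D1 by simp
    ultimately show ?thesis using iiD D_def by simp
  next
    case False
    interpret cyc mu using mu False by unfold_locales auto
    have PD: "P \<subseteq> D"
    proof
      fix x assume "x \<in> P"
      then obtain k where k: "x = mu ^ (k * CARD('n))" by (auto simp: P_def)
      hence "x = (mu ^ k) ^ CARD('n)" by (simp add: power_mult)
      moreover have "mu ^ k \<noteq> 0" using False by simp
      ultimately show "x \<in> D" using pow_in_D D_def by simp
    qed
    have mP: "msub P" unfolding msub_def
    proof (intro conjI ballI)
      show "1 \<in> P" unfolding P_def by (rule CollectI, rule exI[of _ 0]) simp
      show "0 \<notin> P" using False by (auto simp: P_def)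
      fix x y assume "x \<in> P" "y \<in> P"
      then obtain a b where "x = mu ^ (a * CARD('n))" "y = mu ^ (b * CARD('n))" by (auto simp: P_def)
      hence "x * y = mu ^ ((a + b) * CARD('n))" by (simp add: power_add add_mult_distrib)
      thus "x * y \<in> P" by (auto simp: P_def)
    qed
    have mD: "msub D" using msub_D D_def by simp
    have KD: "KL \<subseteq> D" using KL_D D_def by simp
    have Pinv: "\<And>x. x \<in> P \<Longrightarrow> inverse x \<in> P" using msub_inverse[OF mP] by blast
    have cardP: "card (Pdets mu (GLpart G)) = card D div card P"
      using card_cosets[OF mP mD PD _ Pinv] Pd by simp
    have mprodeq: "mprod P KL = dets (GLpart L)"
    proof
      show "mprod P KL \<subseteq> dets (GLpart L)"
      proof
        fix x assume "x \<in> mprod P KL"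
        then obtain k q where "q \<in> KL" "x = mu ^ (k * CARD('n)) * q" by (auto simp: mprod_def P_def)
        moreover have "mu ^ (k * CARD('n)) = (mu ^ k) ^ CARD('n)" by (simp add: power_mult)
        moreover have "mu ^ k \<noteq> 0" using False by simp
        ultimately have "x = (mu ^ k) ^ CARD('n) * q \<and> mu ^ k \<noteq> 0 \<and> q \<in> KL" by simp
        thus "x \<in> dets (GLpart L)" unfolding detsL by blast
      qed
    next
      show "dets (GLpart L) \<subseteq> mprod P KL"
      proof
        fix x assume "x \<in> dets (GLpart L)"
        then obtain c q where cq: "c \<noteq> 0" "q \<in> KL" "x = c ^ CARD('n) * q" using detsL by auto
        obtain j where "c = mu ^ j" using mu cq(1) by blast
        hence "c ^ CARD('n) \<in> P" unfolding P_def by (auto simp: power_mult[symmetric])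
        thus "x \<in> mprod P KL" using cq by (auto simp: mprod_def)
      qed
    qed
    have "D \<subseteq> dets (GLpart L) \<longleftrightarrow> coprime (card D div card KL) (card D div card P)"
      using cyc_main[OF mD mP msub_KL PD KD] mprodeq by simp
    thus ?thesis using iiD index_eq[OF gal] cardP D_def by simp
  qed
qed

theorem main_result:
  fixes mu :: 'a
  assumes mu: "\<forall>x::'a. x \<noteq> 0 \<longrightarrow> (\<exists>k. x = mu ^ k)"
  shows "(two_by_block_transitive G L (stab0 i0 G)
            \<longleftrightarrow> eidx L = eidx G \<and> dets (GLpart L) = dets (GLpart G))
       \<and> (eidx L = eidx G \<and> dets (GLpart L) = dets (GLpart G)
            \<longleftrightarrow> eidx L = eidx G
                \<and> coprime (card (stab0 i0 G) div card L) (card (Pdets mu (GLpart G))))"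
proof
  show "two_by_block_transitive G L B \<longleftrightarrow> eidx L = eidx G \<and> dets (GLpart L) = dets (GLpart G)"
  proof
    assume T: "two_by_block_transitive G L B"
    have "sof ` L = sof ` B" using i_gal[OF T] LB by auto
    hence "eidx L = eidx G" using eidx_iff by simp
    moreover have "dets (GLpart L) = dets (GLpart G)" using i_det[OF T] detsL_sub by blast
    ultimately show "eidx L = eidx G \<and> dets (GLpart L) = dets (GLpart G)" by simp
  next
    assume "eidx L = eidx G \<and> dets (GLpart L) = dets (GLpart G)"
    thus "two_by_block_transitive G L B" using ii_imp_i eidx_iff by simp
  qed
next
  show "eidx L = eidx G \<and> dets (GLpart L) = dets (GLpart G) \<longleftrightarrow>
        eidx L = eidx G \<and> coprime (card B div card L) (card (Pdets mu (GLpart G)))"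
    using ii_iff_iii[OF _ mu] eidx_iff by blast
qed

end

theorem proposition3p13:
  fixes G L :: "('a::{field,finite}, 'n::finite) vmap set"
    and mu :: 'a and i0 :: 'n and n :: nat
  assumes n: "CARD('n) = n + 1" "n \<ge> 2"
    and mu: "\<forall>x::'a. x \<noteq> 0 \<longrightarrow> (\<exists>k. x = mu ^ k)"
    and G: "is_subgroup G" "setprod Zsc SL \<subseteq> G"
    and L: "is_subgroup L" "Mgrp i0 G \<subseteq> L" "L \<subseteq> stab0 i0 G"
  shows "(two_by_block_transitive G L (stab0 i0 G)
            \<longleftrightarrow> eidx L = eidx G \<and> dets (GLpart L) = dets (GLpart G))
       \<and> (eidx L = eidx G \<and> dets (GLpart L) = dets (GLpart G)
            \<longleftrightarrow> eidx L = eidx G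
                \<and> coprime (card (stab0 i0 G) div card L) (card (Pdets mu (GLpart G))))"
proof -
  interpret setL G i0 L
  proof unfold_locales
    show "is_subgroup G" using G(1) .
    show "setprod Zsc SL \<subseteq> G" using G(2) .
    show "CARD('n) \<ge> 3" using n by simp
    show "is_subgroup L" using L(1) .
    show "Mgrp i0 G \<subseteq> L" using L(2) .
    show "L \<subseteq> stab0 i0 G" using L(3) .
  qed
  show ?thesis using main_result[OF mu] by simp
qed

end
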